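(* Let $G$ be a finite group, $\varphi\colon T\to S$ a morphism of $G$-Tambara functors, and $J$ a radical Tambara ideal of $S$. Then the levelwise preimage $\varphi^{-1}(J)$, defined by $\varphi^{-1}(J)(G/H)=\varphi_H^{-1}(J(G/H))$, is a radical Tambara ideal of $T$.
   Context: All rings are commutative with unit. A $G$-Tambara functor $T$ consists of commutative rings $T(G/H)$ for subgroups $H\le G$ with restriction ring maps, additive transfer maps, multiplicative norm maps and conjugation isomorphisms satisfying the standard Tambara axioms (Hill–Mazur). A morphism $\varphi\colon T\to S$ is a family of ring homomorphisms $\varphi_H\colon T(G/H)\to S(G/H)$ commuting with all restrictions, transfers, norms and conjugations. A Tambara ideal is a family of ring ideals $I(G/H)\subseteq T(G/H)$ closed under restriction, transfer, norm and conjugation. $\langle x\rangle$ is the Tambara ideal generated by $x$; products of Tambara ideals are generated by levelwise products. The radical $\sqrt I$ has $\sqrt I(G/H)=\{x\mid \langle x\rangle^n\subseteq I\text{ for some }n\ge1\}$; $I$ is radical if $I=\sqrt I$. *)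

theory Defs
  imports "HOL-Algebra.Algebra"
begin

definition conjg :: "('g,'m) monoid_scheme \<Rightarrow> 'g \<Rightarrow> 'g set \<Rightarrow> 'g set" where
  "conjg G g H = {g \<otimes>\<^bsub>G\<^esub> h \<otimes>\<^bsub>G\<^esub> inv\<^bsub>G\<^esub> g | h. h \<in> H}"

definition dcosets :: "('g,'m) monoid_scheme \<Rightarrow> 'g set \<Rightarrow> 'g set \<Rightarrow> 'g set \<Rightarrow> 'g set set" where
  "dcosets G H K L = {{k \<otimes>\<^bsub>G\<^esub> g \<otimes>\<^bsub>G\<^esub> l | k l. k \<in> K \<and> l \<in> L} | g. g \<in> H}"

definition lcos :: "('g,'m) monoid_scheme \<Rightarrow> 'g set \<Rightarrow> 'g set \<Rightarrow> 'g set set" where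
  "lcos G H K = {l_coset G x K | x. x \<in> H}"

definition rep :: "'x set \<Rightarrow> 'x" where
  "rep D = (SOME g. g \<in> D)"

text \<open>tlev T H is the ring T(G/H); tres T K H : T(G/H) -> T(G/K) (K <= H);
  ttr T K H, tnm T K H : T(G/K) -> T(G/H) (K <= H);
  tcj T g H : T(G/H) -> T(G/gHg^{-1}).\<close>
record ('g,'a) tambara_data =
  tlev :: "'g set \<Rightarrow> 'a ring"
  tres :: "'g set \<Rightarrow> 'g set \<Rightarrow> 'a \<Rightarrow> 'a"
  ttr  :: "'g set \<Rightarrow> 'g set \<Rightarrow> 'a \<Rightarrow> 'a"
  tnm  :: "'g set \<Rightarrow> 'g set \<Rightarrow> 'a \<Rightarrow> 'a"
  tcj  :: "'g \<Rightarrow> 'g set \<Rightarrow> 'a \<Rightarrow> 'a"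

definition bfuns :: "('g,'m) monoid_scheme \<Rightarrow> 'g set \<Rightarrow> 'g set \<Rightarrow> ('g set \<Rightarrow> bool) set" where
  "bfuns G H K = lcos G H K \<rightarrow>\<^sub>E (UNIV :: bool set)"

definition bact :: "('g,'m) monoid_scheme \<Rightarrow> 'g set \<Rightarrow> 'g set \<Rightarrow> 'g \<Rightarrow> ('g set \<Rightarrow> bool) \<Rightarrow> ('g set \<Rightarrow> bool)" where
  "bact G H K h f = (\<lambda>c\<in>lcos G H K. f (l_coset G (inv\<^bsub>G\<^esub> h) c))"

text \<open>H-set of sections s : H/K -> H/L of the projection H/L -> H/K (L <= K <= H),
  with action (h.s)(c) = h s(h^{-1} c).\<close>
definition sects :: "('g,'m) monoid_scheme \<Rightarrow> 'g set \<Rightarrow> 'g set \<Rightarrow> 'g set \<Rightarrow> ('g set \<Rightarrow> 'g set) set" where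
  "sects G H K L = {s \<in> lcos G H K \<rightarrow>\<^sub>E lcos G H L. \<forall>c \<in> lcos G H K. s c \<subseteq> c}"

definition sact :: "('g,'m) monoid_scheme \<Rightarrow> 'g set \<Rightarrow> 'g set \<Rightarrow> 'g \<Rightarrow> ('g set \<Rightarrow> 'g set) \<Rightarrow> ('g set \<Rightarrow> 'g set)" where
  "sact G H K h s = (\<lambda>c\<in>lcos G H K. l_coset G h (s (l_coset G (inv\<^bsub>G\<^esub> h) c)))"

definition horbits :: "'g set \<Rightarrow> ('g \<Rightarrow> 'x \<Rightarrow> 'x) \<Rightarrow> 'x set \<Rightarrow> 'x set set" where
  "horbits H A Y = {{A g0 x0 | g0. g0 \<in> H} | x0. x0 \<in> Y}"

definition hstab :: "'g set \<Rightarrow> ('g \<Rightarrow> 'x \<Rightarrow> 'x) \<Rightarrow> 'x \<Rightarrow> 'g set" where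
  "hstab H A x0 = {g0 \<in> H. A g0 x0 = x0}"

section \<open>G-Tambara functors (levelwise axioms, after Hill--Mazur)\<close>

definition is_tambara :: "('g,'m) monoid_scheme \<Rightarrow> ('g,'a) tambara_data \<Rightarrow> bool" where
  "is_tambara G T \<longleftrightarrow>
   \<comment> \<open>levels are commutative rings\<close>
   (\<forall>H. subgroup H G \<longrightarrow> cring (tlev T H)) \<and>
   \<comment> \<open>restriction: ring maps, functorial\<close>
   (\<forall>K H. subgroup K G \<longrightarrow> subgroup H G \<longrightarrow> K \<subseteq> H \<longrightarrow>
       tres T K H \<in> ring_hom (tlev T H) (tlev T K)) \<and>
   (\<forall>H. subgroup H G \<longrightarrow> (\<forall>x \<in> carrier (tlev T H). tres T H H x = x)) \<and>
   (\<forall>L K H. subgroup L G \<longrightarrow> subgroup K G \<longrightarrow> subgroup H G \<longrightarrow> L \<subseteq> K \<longrightarrow> K \<subseteq> H \<longrightarrow>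
       (\<forall>x \<in> carrier (tlev T H). tres T L K (tres T K H x) = tres T L H x)) \<and>
   \<comment> \<open>transfer: additive maps, functorial\<close>
   (\<forall>K H. subgroup K G \<longrightarrow> subgroup H G \<longrightarrow> K \<subseteq> H \<longrightarrow>
       (\<forall>x \<in> carrier (tlev T K). ttr T K H x \<in> carrier (tlev T H)) \<and>
       (\<forall>x \<in> carrier (tlev T K). \<forall>y \<in> carrier (tlev T K).
          ttr T K H (x \<oplus>\<^bsub>tlev T K\<^esub> y) = ttr T K H x \<oplus>\<^bsub>tlev T H\<^esub> ttr T K H y)) \<and>
   (\<forall>H. subgroup H G \<longrightarrow> (\<forall>x \<in> carrier (tlev T H). ttr T H H x = x)) \<and>
   (\<forall>L K H. subgroup L G \<longrightarrow> subgroup K G \<longrightarrow> subgroup H G \<longrightarrow> L \<subseteq> K \<longrightarrow> K \<subseteq> H \<longrightarrow>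
       (\<forall>x \<in> carrier (tlev T L). ttr T K H (ttr T L K x) = ttr T L H x)) \<and>
   \<comment> \<open>norm: multiplicative maps preserving 1 and 0, functorial\<close>
   (\<forall>K H. subgroup K G \<longrightarrow> subgroup H G \<longrightarrow> K \<subseteq> H \<longrightarrow>
       (\<forall>x \<in> carrier (tlev T K). tnm T K H x \<in> carrier (tlev T H)) \<and>
       (\<forall>x \<in> carrier (tlev T K). \<forall>y \<in> carrier (tlev T K).
          tnm T K H (x \<otimes>\<^bsub>tlev T K\<^esub> y) = tnm T K H x \<otimes>\<^bsub>tlev T H\<^esub> tnm T K H y) \<and>
       tnm T K H \<one>\<^bsub>tlev T K\<^esub> = \<one>\<^bsub>tlev T H\<^esub> \<and>
       tnm T K H \<zero>\<^bsub>tlev T K\<^esub> = \<zero>\<^bsub>tlev T H\<^esub>) \<and>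
   (\<forall>H. subgroup H G \<longrightarrow> (\<forall>x \<in> carrier (tlev T H). tnm T H H x = x)) \<and>
   (\<forall>L K H. subgroup L G \<longrightarrow> subgroup K G \<longrightarrow> subgroup H G \<longrightarrow> L \<subseteq> K \<longrightarrow> K \<subseteq> H \<longrightarrow>
       (\<forall>x \<in> carrier (tlev T L). tnm T K H (tnm T L K x) = tnm T L H x)) \<and>
   \<comment> \<open>conjugations: ring maps, action, inner conjugations trivial\<close>
   (\<forall>H g. subgroup H G \<longrightarrow> g \<in> carrier G \<longrightarrow>
       tcj T g H \<in> ring_hom (tlev T H) (tlev T (conjg G g H))) \<and>
   (\<forall>H g g'. subgroup H G \<longrightarrow> g \<in> carrier G \<longrightarrow> g' \<in> carrier G \<longrightarrow>
       (\<forall>x \<in> carrier (tlev T H).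
          tcj T (g \<otimes>\<^bsub>G\<^esub> g') H x = tcj T g (conjg G g' H) (tcj T g' H x))) \<and>
   (\<forall>H h. subgroup H G \<longrightarrow> h \<in> H \<longrightarrow> (\<forall>x \<in> carrier (tlev T H). tcj T h H x = x)) \<and>
   \<comment> \<open>conjugations commute with restriction, transfer, norm\<close>
   (\<forall>K H g. subgroup K G \<longrightarrow> subgroup H G \<longrightarrow> K \<subseteq> H \<longrightarrow> g \<in> carrier G \<longrightarrow>
       (\<forall>x \<in> carrier (tlev T H).
          tcj T g K (tres T K H x) = tres T (conjg G g K) (conjg G g H) (tcj T g H x)) \<and>
       (\<forall>x \<in> carrier (tlev T K).
          tcj T g H (ttr T K H x) = ttr T (conjg G g K) (conjg G g H) (tcj T g K x)) \<and>
       (\<forall>x \<in> carrier (tlev T K).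
          tcj T g H (tnm T K H x) = tnm T (conjg G g K) (conjg G g H) (tcj T g K x))) \<and>
   \<comment> \<open>Frobenius reciprocity\<close>
   (\<forall>K H. subgroup K G \<longrightarrow> subgroup H G \<longrightarrow> K \<subseteq> H \<longrightarrow>
       (\<forall>a \<in> carrier (tlev T K). \<forall>b \<in> carrier (tlev T H).
          ttr T K H (a \<otimes>\<^bsub>tlev T K\<^esub> tres T K H b) = ttr T K H a \<otimes>\<^bsub>tlev T H\<^esub> b)) \<and>
   \<comment> \<open>additive Mackey double coset formula\<close>
   (\<forall>K L H. subgroup K G \<longrightarrow> subgroup L G \<longrightarrow> subgroup H G \<longrightarrow> K \<subseteq> H \<longrightarrow> L \<subseteq> H \<longrightarrow>
       (\<forall>a \<in> carrier (tlev T L).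
          tres T K H (ttr T L H a) =
          finsum (tlev T K)
            (\<lambda>D. ttr T (K \<inter> conjg G (rep D) L) K
                   (tcj T (rep D) (conjg G (inv\<^bsub>G\<^esub> (rep D)) K \<inter> L)
                     (tres T (conjg G (inv\<^bsub>G\<^esub> (rep D)) K \<inter> L) L a)))
            (dcosets G H K L))) \<and>
   \<comment> \<open>multiplicative Mackey double coset formula\<close>
   (\<forall>K L H. subgroup K G \<longrightarrow> subgroup L G \<longrightarrow> subgroup H G \<longrightarrow> K \<subseteq> H \<longrightarrow> L \<subseteq> H \<longrightarrow>
       (\<forall>a \<in> carrier (tlev T L).
          tres T K H (tnm T L H a) =
          finprod (tlev T K)
            (\<lambda>D. tnm T (K \<inter> conjg G (rep D) L) K
                   (tcj T (rep D) (conjg G (inv\<^bsub>G\<^esub> (rep D)) K \<inter> L)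
                     (tres T (conjg G (inv\<^bsub>G\<^esub> (rep D)) K \<inter> L) L a)))
            (dcosets G H K L))) \<and>
   \<comment> \<open>Tambara reciprocity for sums (exponential formula)\<close>
   (\<forall>K H. subgroup K G \<longrightarrow> subgroup H G \<longrightarrow> K \<subseteq> H \<longrightarrow>
       (\<forall>a \<in> carrier (tlev T K). \<forall>b \<in> carrier (tlev T K).
          tnm T K H (a \<oplus>\<^bsub>tlev T K\<^esub> b) =
          finsum (tlev T H)
            (\<lambda>Orb. let f = rep Orb; Hf = hstab H (bact G H K) f in
               ttr T Hf H
                 (finprod (tlev T Hf)
                   (\<lambda>D. let x = rep D in
                      tnm T (Hf \<inter> conjg G x K) Hf
                        (tcj T x (conjg G (inv\<^bsub>G\<^esub> x) Hf \<inter> K)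
                          (tres T (conjg G (inv\<^bsub>G\<^esub> x) Hf \<inter> K) K
                             (if f (l_coset G x K) then a else b))))
                   (dcosets G H Hf K)))
            (horbits H (bact G H K) (bfuns G H K)))) \<and>
   \<comment> \<open>Tambara reciprocity for transfers (exponential formula)\<close>
   (\<forall>L K H. subgroup L G \<longrightarrow> subgroup K G \<longrightarrow> subgroup H G \<longrightarrow> L \<subseteq> K \<longrightarrow> K \<subseteq> H \<longrightarrow>
       (\<forall>a \<in> carrier (tlev T L).
          tnm T K H (ttr T L K a) =
          finsum (tlev T H)
            (\<lambda>Orb. let s = rep Orb; Hs = hstab H (sact G H K) s in
               ttr T Hs H
                 (finprod (tlev T Hs)
                   (\<lambda>D. let x = rep D;
                          y = (SOME y. y \<in> H \<and> s (l_coset G x K) = l_coset G y L) in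
                      tnm T (Hs \<inter> conjg G y L) Hs
                        (tcj T y (conjg G (inv\<^bsub>G\<^esub> y) Hs \<inter> L)
                          (tres T (conjg G (inv\<^bsub>G\<^esub> y) Hs \<inter> L) L a)))
                   (dcosets G H Hs K)))
            (horbits H (sact G H K) (sects G H K L))))"

definition is_tmorph :: "('g,'m) monoid_scheme \<Rightarrow> ('g,'a) tambara_data \<Rightarrow> ('g,'b) tambara_data
    \<Rightarrow> ('g set \<Rightarrow> 'a \<Rightarrow> 'b) \<Rightarrow> bool" where
  "is_tmorph G T S \<phi> \<longleftrightarrow>
   (\<forall>H. subgroup H G \<longrightarrow> \<phi> H \<in> ring_hom (tlev T H) (tlev S H)) \<and>
   (\<forall>K H. subgroup K G \<longrightarrow> subgroup H G \<longrightarrow> K \<subseteq> H \<longrightarrow>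
      (\<forall>x \<in> carrier (tlev T H). \<phi> K (tres T K H x) = tres S K H (\<phi> H x)) \<and>
      (\<forall>x \<in> carrier (tlev T K). \<phi> H (ttr T K H x) = ttr S K H (\<phi> K x)) \<and>
      (\<forall>x \<in> carrier (tlev T K). \<phi> H (tnm T K H x) = tnm S K H (\<phi> K x))) \<and>
   (\<forall>H g. subgroup H G \<longrightarrow> g \<in> carrier G \<longrightarrow>
      (\<forall>x \<in> carrier (tlev T H). \<phi> (conjg G g H) (tcj T g H x) = tcj S g H (\<phi> H x)))"

definition is_tideal :: "('g,'m) monoid_scheme \<Rightarrow> ('g,'a) tambara_data \<Rightarrow> ('g set \<Rightarrow> 'a set) \<Rightarrow> bool" where
  "is_tideal G T I \<longleftrightarrow>
   (\<forall>H. subgroup H G \<longrightarrow> ideal (I H) (tlev T H)) \<and>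
   (\<forall>K H. subgroup K G \<longrightarrow> subgroup H G \<longrightarrow> K \<subseteq> H \<longrightarrow>
      (\<forall>x \<in> I H. tres T K H x \<in> I K) \<and>
      (\<forall>x \<in> I K. ttr T K H x \<in> I H) \<and>
      (\<forall>x \<in> I K. tnm T K H x \<in> I H)) \<and>
   (\<forall>H g. subgroup H G \<longrightarrow> g \<in> carrier G \<longrightarrow>
      (\<forall>x \<in> I H. tcj T g H x \<in> I (conjg G g H)))"

definition tgen :: "('g,'m) monoid_scheme \<Rightarrow> ('g,'a) tambara_data \<Rightarrow> ('g set \<Rightarrow> 'a set) \<Rightarrow> ('g set \<Rightarrow> 'a set)" where
  "tgen G T A = (\<lambda>L. \<Inter> {I L | I. is_tideal G T I \<and> (\<forall>M. subgroup M G \<longrightarrow> A M \<subseteq> I M)})"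

definition tgen1 :: "('g,'m) monoid_scheme \<Rightarrow> ('g,'a) tambara_data \<Rightarrow> 'g set \<Rightarrow> 'a \<Rightarrow> ('g set \<Rightarrow> 'a set)" where
  "tgen1 G T H x = tgen G T (\<lambda>L. if L = H then {x} else {})"

definition tprod :: "('g,'m) monoid_scheme \<Rightarrow> ('g,'a) tambara_data \<Rightarrow> ('g set \<Rightarrow> 'a set) \<Rightarrow> ('g set \<Rightarrow> 'a set) \<Rightarrow> ('g set \<Rightarrow> 'a set)" where
  "tprod G T I J = tgen G T (\<lambda>L. {a \<otimes>\<^bsub>tlev T L\<^esub> b | a b. a \<in> I L \<and> b \<in> J L})"

fun tpow :: "('g,'m) monoid_scheme \<Rightarrow> ('g,'a) tambara_data \<Rightarrow> ('g set \<Rightarrow> 'a set) \<Rightarrow> nat \<Rightarrow> ('g set \<Rightarrow> 'a set)" where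
  "tpow G T I 0 = (\<lambda>L. carrier (tlev T L))"
| "tpow G T I (Suc n) = tprod G T (tpow G T I n) I"

definition tradical :: "('g,'m) monoid_scheme \<Rightarrow> ('g,'a) tambara_data \<Rightarrow> ('g set \<Rightarrow> 'a set) \<Rightarrow> ('g set \<Rightarrow> 'a set)" where
  "tradical G T I = (\<lambda>H. {x \<in> carrier (tlev T H). \<exists>n\<ge>1.
       \<forall>L. subgroup L G \<longrightarrow> tpow G T (tgen1 G T H x) n L \<subseteq> I L})"

definition is_radical :: "('g,'m) monoid_scheme \<Rightarrow> ('g,'a) tambara_data \<Rightarrow> ('g set \<Rightarrow> 'a set) \<Rightarrow> bool" where
  "is_radical G T I \<longleftrightarrow> (\<forall>H. subgroup H G \<longrightarrow> I H = tradical G T I H)"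

definition tpreim :: "('g,'a) tambara_data \<Rightarrow> ('g set \<Rightarrow> 'a \<Rightarrow> 'b) \<Rightarrow> ('g set \<Rightarrow> 'b set) \<Rightarrow> ('g set \<Rightarrow> 'a set)" where
  "tpreim T \<phi> J = (\<lambda>H. {x \<in> carrier (tlev T H). \<phi> H x \<in> J H})"

end

theory Submission
  imports Defs
begin

context group begin

lemma cancel1: "g \<in> carrier G \<Longrightarrow> y \<in> carrier G \<Longrightarrow> inv g \<otimes> (g \<otimes> y) = y"
  by (simp add: m_assoc[symmetric])
lemma cancel2: "g \<in> carrier G \<Longrightarrow> y \<in> carrier G \<Longrightarrow> g \<otimes> (inv g \<otimes> y) = y"
  by (simp add: m_assoc[symmetric])

lemma conjg_sub: "H \<subseteq> carrier G \<Longrightarrow> g \<in> carrier G \<Longrightarrow> conjg G g H \<subseteq> carrier G"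
  unfolding conjg_def by auto

lemma conjg_subgroup:
  assumes H: "subgroup H G" and g: "g \<in> carrier G"
  shows "subgroup (conjg G g H) G"
proof (rule subgroupI)
  have Hc: "H \<subseteq> carrier G" using H subgroup.subset by blast
  show "conjg G g H \<subseteq> carrier G" using conjg_sub[OF Hc g] .
  show "conjg G g H \<noteq> {}" unfolding conjg_def using subgroup.one_closed[OF H] by blast
  fix a assume "a \<in> conjg G g H"
  then obtain h where h: "h \<in> H" "a = g \<otimes> h \<otimes> inv g" unfolding conjg_def by blast
  have hc: "h \<in> carrier G" using h Hc by blast
  have "inv a = g \<otimes> inv h \<otimes> inv g" using h hc g by (simp add: inv_mult_group m_assoc)
  then show "inv a \<in> conjg G g H" unfolding conjg_def using subgroup.m_inv_closed[OF H h(1)] by blast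
next
  have Hc: "H \<subseteq> carrier G" using H subgroup.subset by blast
  fix a b assume "a \<in> conjg G g H" "b \<in> conjg G g H"
  then obtain h k where h: "h \<in> H" "a = g \<otimes> h \<otimes> inv g" and k: "k \<in> H" "b = g \<otimes> k \<otimes> inv g"
    unfolding conjg_def by blast
  have hc: "h \<in> carrier G" "k \<in> carrier G" using h k Hc by blast+
  have "a \<otimes> b = g \<otimes> (h \<otimes> k) \<otimes> inv g" using h k hc g
    by (simp add: m_assoc cancel1)
  then show "a \<otimes> b \<in> conjg G g H" unfolding conjg_def using subgroup.m_closed[OF H h(1) k(1)] by blast
qed

lemma conjg_comp:
  assumes Hc: "H \<subseteq> carrier G" and g: "g \<in> carrier G" and h: "h \<in> carrier G"
  shows "conjg G g (conjg G h H) = conjg G (g \<otimes> h) H"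
proof -
  have "g \<otimes> (h \<otimes> k \<otimes> inv h) \<otimes> inv g = g \<otimes> h \<otimes> k \<otimes> inv (g \<otimes> h)" if "k \<in> H" for k
    using that Hc g h by (auto simp: m_assoc inv_mult_group)
  then show ?thesis unfolding conjg_def
    apply (auto)
    subgoal for k by (rule_tac x="h \<otimes> k \<otimes> inv h" in exI) auto
    done
qed

lemma conjg_one: "H \<subseteq> carrier G \<Longrightarrow> conjg G \<one> H = H"
  unfolding conjg_def apply auto
  subgoal for x by (rule_tac x=x in exI) (auto simp: subsetD)
  done

lemma conjg_inv_cancel:
  assumes Hc: "H \<subseteq> carrier G" and g: "g \<in> carrier G"
  shows "conjg G g (conjg G (inv g) H) = H" "conjg G (inv g) (conjg G g H) = H"
  using conjg_comp[OF Hc g inv_closed[OF g]] conjg_comp[OF Hc inv_closed[OF g] g] conjg_one[OF Hc] g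
  by auto

lemma conj_inj: "g \<in> carrier G \<Longrightarrow> a \<in> carrier G \<Longrightarrow> b \<in> carrier G \<Longrightarrow>
  g \<otimes> a \<otimes> inv g = g \<otimes> b \<otimes> inv g \<Longrightarrow> a = b"
  by (simp add: m_assoc)

lemma conjg_mono: "A \<subseteq> B \<Longrightarrow> conjg G g A \<subseteq> conjg G g B"
  unfolding conjg_def by auto

lemma conjg_Int:
  assumes "A \<subseteq> carrier G" "B \<subseteq> carrier G" "g \<in> carrier G"
  shows "conjg G g (A \<inter> B) = conjg G g A \<inter> conjg G g B"
proof
  show "conjg G g (A \<inter> B) \<subseteq> conjg G g A \<inter> conjg G g B" using conjg_mono by blast
  show "conjg G g A \<inter> conjg G g B \<subseteq> conjg G g (A \<inter> B)"
  proof
    fix y assume "y \<in> conjg G g A \<inter> conjg G g B"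
    then obtain a b where a: "a \<in> A" "y = g \<otimes> a \<otimes> inv g" and b: "b \<in> B" "y = g \<otimes> b \<otimes> inv g"
      unfolding conjg_def by blast
    have "a = b" using a b assms conj_inj[of g a b] by blast
    then show "y \<in> conjg G g (A \<inter> B)" using a b unfolding conjg_def by blast
  qed
qed

lemma conjg_card:
  assumes "A \<subseteq> carrier G" "g \<in> carrier G"
  shows "card (conjg G g A) = card A"
proof -
  have "conjg G g A = (\<lambda>h. g \<otimes> h \<otimes> inv g) ` A" unfolding conjg_def by auto
  moreover have "inj_on (\<lambda>h. g \<otimes> h \<otimes> inv g) A"
    using assms conj_inj[of g] by (intro inj_onI) blast
  ultimately show ?thesis by (simp add: card_image)
qed

lemma conjg_key:
  assumes "A \<subseteq> carrier G" "B \<subseteq> carrier G" "x \<in> carrier G"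
  shows "conjg G x (conjg G (inv x) A \<inter> B) = A \<inter> conjg G x B"
  using assms conjg_Int[OF conjg_sub[OF assms(1) inv_closed[OF assms(3)]] assms(2) assms(3)]
    conjg_inv_cancel by simp

lemma dcos_elem_in:
  assumes H: "subgroup H G" and K: "subgroup K G" and L: "subgroup L G" and KH: "K \<subseteq> H" and LH: "L \<subseteq> H"
    and D: "D \<in> dcosets G H K L"
  shows "D \<subseteq> H" "D \<noteq> {}"
proof -
  obtain g where g: "g \<in> H" "D = {k \<otimes> g \<otimes> l | k l. k \<in> K \<and> l \<in> L}"
    using D unfolding dcosets_def by blast
  show "D \<subseteq> H" using g KH LH subgroup.m_closed[OF H] by blast
  have "g \<in> carrier G" using g subgroup.subset[OF H] by blast
  then have "\<one> \<otimes> g \<otimes> \<one> \<in> D" using g subgroup.one_closed[OF K] subgroup.one_closed[OF L] by blast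
  then show "D \<noteq> {}" by blast
qed

lemma dcos_rep:
  assumes H: "subgroup H G" and K: "subgroup K G" and L: "subgroup L G" and KH: "K \<subseteq> H" and LH: "L \<subseteq> H"
    and D: "D \<in> dcosets G H K L"
  shows "rep D \<in> H" "rep D \<in> carrier G"
proof -
  have "rep D \<in> D" using dcos_elem_in(2)[OF assms] unfolding rep_def by (metis ex_in_conv someI_ex)
  then show "rep D \<in> H" using dcos_elem_in(1)[OF assms] by blast
  then show "rep D \<in> carrier G" using subgroup.subset[OF H] by blast
qed

lemma dcos_fin:
  assumes fin: "finite (carrier G)" and H: "subgroup H G" and K: "subgroup K G" and L: "subgroup L G" and KH: "K \<subseteq> H" and LH: "L \<subseteq> H"
  shows "finite (dcosets G H K L)"
proof -
  have "dcosets G H K L \<subseteq> Pow (carrier G)"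
    using dcos_elem_in(1)[OF H K L KH LH] subgroup.subset[OF H] by blast
  then show ?thesis using fin by (meson finite_Pow_iff finite_subset)
qed

lemma dcos_ne:
  assumes H: "subgroup H G"
  shows "dcosets G H K L \<noteq> {}"
  using subgroup.one_closed[OF H] unfolding dcosets_def by blast

lemma hstab_subgroup:
  assumes H: "subgroup H G" and y: "y \<in> Y"
    and cl: "\<And>g y. g \<in> H \<Longrightarrow> y \<in> Y \<Longrightarrow> A g y \<in> Y"
    and one: "\<And>y. y \<in> Y \<Longrightarrow> A \<one> y = y"
    and comp: "\<And>g h y. g \<in> H \<Longrightarrow> h \<in> H \<Longrightarrow> y \<in> Y \<Longrightarrow> A (g \<otimes> h) y = A g (A h y)"
  shows "subgroup (hstab H A y) G" "hstab H A y \<subseteq> H"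
proof -
  show "hstab H A y \<subseteq> H" unfolding hstab_def by blast
  show "subgroup (hstab H A y) G"
  proof (rule subgroupI)
    show "hstab H A y \<subseteq> carrier G" unfolding hstab_def using subgroup.subset[OF H] by blast
    have "\<one> \<in> hstab H A y" unfolding hstab_def using one[OF y] subgroup.one_closed[OF H] by simp
    then show "hstab H A y \<noteq> {}" by blast
  next
    fix a assume a: "a \<in> hstab H A y"
    then have aH: "a \<in> H" "A a y = y" unfolding hstab_def by auto
    have ia: "inv a \<in> H" using subgroup.m_inv_closed[OF H aH(1)] .
    have ac: "a \<in> carrier G" using aH subgroup.subset[OF H] by blast
    have "A (inv a) y = A (inv a) (A a y)" using aH by simp
    also have "\<dots> = A (inv a \<otimes> a) y" using comp[OF ia aH(1) y] by simp
    also have "\<dots> = y" using ac one[OF y] by simp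
    finally show "inv a \<in> hstab H A y" unfolding hstab_def using ia by blast
  next
    fix a b assume "a \<in> hstab H A y" "b \<in> hstab H A y"
    then have a: "a \<in> H" "A a y = y" and b: "b \<in> H" "A b y = y" unfolding hstab_def by auto
    have "A (a \<otimes> b) y = y" using comp[OF a(1) b(1) y] a b by simp
    then show "a \<otimes> b \<in> hstab H A y" unfolding hstab_def using subgroup.m_closed[OF H a(1) b(1)] by blast
  qed
qed

lemma horbit_rep:
  assumes H: "subgroup H G" and O: "Orb \<in> horbits H A Y"
    and cl: "\<And>g y. g \<in> H \<Longrightarrow> y \<in> Y \<Longrightarrow> A g y \<in> Y"
  shows "rep Orb \<in> Y"
proof -
  obtain x0 where x0: "x0 \<in> Y" "Orb = {A g0 x0 | g0. g0 \<in> H}" using O unfolding horbits_def by blast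
  have "A \<one> x0 \<in> Orb" using x0 subgroup.one_closed[OF H] by blast
  then have "Orb \<noteq> {}" by blast
  then have "rep Orb \<in> Orb" unfolding rep_def by (metis ex_in_conv someI_ex)
  then obtain g0 where "g0 \<in> H" "rep Orb = A g0 x0" using x0 by blast
  then show ?thesis using x0 cl by simp
qed

lemma lcos_closed:
  assumes H: "subgroup H G" and K: "subgroup K G" and c: "c \<in> lcos G H K" and h: "h \<in> H"
  shows "h <# c \<in> lcos G H K"
proof -
  obtain x where x: "x \<in> H" "c = x <# K" using c unfolding lcos_def by blast
  have "h <# c = (h \<otimes> x) <# K" using x h subgroup.subset[OF H] subgroup.subset[OF K]
    by (simp add: lcos_m_assoc subsetD)
  then show ?thesis unfolding lcos_def using subgroup.m_closed[OF H h x(1)] by blast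
qed

lemma lcos_sub:
  assumes H: "subgroup H G" and K: "subgroup K G" and c: "c \<in> lcos G H K"
  shows "c \<subseteq> carrier G"
  using c subgroup.subset[OF H] subgroup.subset[OF K] unfolding lcos_def
  by (auto intro: l_coset_subset_G[THEN subsetD])

lemma bact_props:
  assumes H: "subgroup H G" and K: "subgroup K G"
  shows "\<And>g f. g \<in> H \<Longrightarrow> f \<in> bfuns G H K \<Longrightarrow> bact G H K g f \<in> bfuns G H K"
    "\<And>f. f \<in> bfuns G H K \<Longrightarrow> bact G H K \<one> f = f"
    "\<And>g h f. g \<in> H \<Longrightarrow> h \<in> H \<Longrightarrow> f \<in> bfuns G H K \<Longrightarrow> bact G H K (g \<otimes> h) f = bact G H K g (bact G H K h f)"
proof -
  fix g f show "bact G H K g f \<in> bfuns G H K" unfolding bact_def bfuns_def by auto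
next
  fix f assume f: "f \<in> bfuns G H K"
  show "bact G H K \<one> f = f"
  proof
    fix c show "bact G H K \<one> f c = f c"
      using f lcos_sub[OF H K] unfolding bact_def bfuns_def
      by (auto simp: lcos_mult_one PiE_def extensional_def)
  qed
next
  fix g h f assume g: "g \<in> H" and h: "h \<in> H" and f: "f \<in> bfuns G H K"
  have gc: "g \<in> carrier G" and hc: "h \<in> carrier G" using g h subgroup.subset[OF H] by auto
  show "bact G H K (g \<otimes> h) f = bact G H K g (bact G H K h f)"
  proof
    fix c show "bact G H K (g \<otimes> h) f c = bact G H K g (bact G H K h f) c"
    proof (cases "c \<in> lcos G H K")
      case True
      have ic: "inv g <# c \<in> lcos G H K" using lcos_closed[OF H K True subgroup.m_inv_closed[OF H g]] .
      have "inv (g \<otimes> h) <# c = inv h <# (inv g <# c)"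
        using gc hc lcos_sub[OF H K True] by (simp add: inv_mult_group lcos_m_assoc)
      then show ?thesis using True ic unfolding bact_def by simp
    next
      case False then show ?thesis unfolding bact_def by simp
    qed
  qed
qed

lemma lcos_mono: "A \<subseteq> B \<Longrightarrow> x <# A \<subseteq> x <# B"
  unfolding l_coset_def by auto

lemma sact_props:
  assumes H: "subgroup H G" and K: "subgroup K G" and L: "subgroup L G"
  shows "\<And>g s. g \<in> H \<Longrightarrow> s \<in> sects G H K L \<Longrightarrow> sact G H K g s \<in> sects G H K L"
    "\<And>s. s \<in> sects G H K L \<Longrightarrow> sact G H K \<one> s = s"
    "\<And>g h s. g \<in> H \<Longrightarrow> h \<in> H \<Longrightarrow> s \<in> sects G H K L \<Longrightarrow> sact G H K (g \<otimes> h) s = sact G H K g (sact G H K h s)"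
proof -
  fix g s assume g: "g \<in> H" and s: "s \<in> sects G H K L"
  have gc: "g \<in> carrier G" using g subgroup.subset[OF H] by auto
  show "sact G H K g s \<in> sects G H K L"
    unfolding sects_def
  proof (intro CollectI conjI ballI)
    show "sact G H K g s \<in> lcos G H K \<rightarrow>\<^sub>E lcos G H L"
    proof
      fix c assume c: "c \<in> lcos G H K"
      have ic: "inv g <# c \<in> lcos G H K" using lcos_closed[OF H K c subgroup.m_inv_closed[OF H g]] .
      then have "s (inv g <# c) \<in> lcos G H L" using s unfolding sects_def by blast
      then show "sact G H K g s c \<in> lcos G H L" using c lcos_closed[OF H L _ g] unfolding sact_def by simp
    next
      fix c assume "c \<notin> lcos G H K" then show "sact G H K g s c = undefined" unfolding sact_def by simp
    qed
  next
    fix c assume c: "c \<in> lcos G H K"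
    have ic: "inv g <# c \<in> lcos G H K" using lcos_closed[OF H K c subgroup.m_inv_closed[OF H g]] .
    then have "s (inv g <# c) \<subseteq> inv g <# c" using s unfolding sects_def by blast
    then have "g <# s (inv g <# c) \<subseteq> g <# (inv g <# c)" by (rule lcos_mono)
    also have "\<dots> = c" using gc lcos_sub[OF H K c] by (simp add: lcos_m_assoc lcos_mult_one)
    finally show "sact G H K g s c \<subseteq> c" using c unfolding sact_def by simp
  qed
next
  fix s assume s: "s \<in> sects G H K L"
  show "sact G H K \<one> s = s"
  proof
    fix c show "sact G H K \<one> s c = s c"
    proof (cases "c \<in> lcos G H K")
      case True
      have "s c \<in> lcos G H L" using s True unfolding sects_def by blast
      then have "s c \<subseteq> carrier G" using lcos_sub[OF H L] by blast
      then show ?thesis using True lcos_sub[OF H K True] unfolding sact_def by (simp add: lcos_mult_one)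
    next
      case False then show ?thesis using s unfolding sact_def sects_def by (auto simp: PiE_def extensional_def)
    qed
  qed
next
  fix g h s assume g: "g \<in> H" and h: "h \<in> H" and s: "s \<in> sects G H K L"
  have gc: "g \<in> carrier G" and hc: "h \<in> carrier G" using g h subgroup.subset[OF H] by auto
  show "sact G H K (g \<otimes> h) s = sact G H K g (sact G H K h s)"
  proof
    fix c show "sact G H K (g \<otimes> h) s c = sact G H K g (sact G H K h s) c"
    proof (cases "c \<in> lcos G H K")
      case True
      have ic: "inv g <# c \<in> lcos G H K" using lcos_closed[OF H K True subgroup.m_inv_closed[OF H g]] .
      have ihc: "inv h <# (inv g <# c) \<in> lcos G H K" using lcos_closed[OF H K ic subgroup.m_inv_closed[OF H h]] .
      have e1: "inv (g \<otimes> h) <# c = inv h <# (inv g <# c)"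
        using gc hc lcos_sub[OF H K True] by (simp add: inv_mult_group lcos_m_assoc)
      have "s (inv h <# (inv g <# c)) \<in> lcos G H L" using s ihc unfolding sects_def by blast
      then have sc: "s (inv h <# (inv g <# c)) \<subseteq> carrier G" using lcos_sub[OF H L] by blast
      show ?thesis using True ic e1 sc gc hc unfolding sact_def by (simp add: lcos_m_assoc)
    next
      case False then show ?thesis unfolding sact_def by simp
    qed
  qed
qed

end

lemma ideal_of_closed:
  fixes R (structure)
  assumes R: "cring R" and sub: "I \<subseteq> carrier R" and z: "\<zero>\<^bsub>R\<^esub> \<in> I"
    and ad: "\<And>a b. a \<in> I \<Longrightarrow> b \<in> I \<Longrightarrow> a \<oplus>\<^bsub>R\<^esub> b \<in> I"
    and mu: "\<And>a x. a \<in> I \<Longrightarrow> x \<in> carrier R \<Longrightarrow> a \<otimes>\<^bsub>R\<^esub> x \<in> I"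
  shows "ideal I R"
proof -
  interpret cring R by fact
  have sg: "subgroup I (add_monoid R)"
  proof (rule group.subgroupI[OF abelian_group.a_group[OF is_abelian_group]])
    show "I \<subseteq> carrier (add_monoid R)" using sub by simp
    show "I \<noteq> {}" using z by blast
  next
    fix a assume a: "a \<in> I"
    have ac: "a \<in> carrier R" using a sub by blast
    have "a \<otimes> (\<ominus> \<one>) = \<ominus> a" using ac by (simp add: r_minus)
    then have "\<ominus> a \<in> I" using mu[OF a] by (metis one_closed a_inv_closed)
    then show "inv\<^bsub>add_monoid R\<^esub> a \<in> I" using ac by (simp add: a_inv_def)
  next
    fix a b assume "a \<in> I" "b \<in> I" then show "a \<otimes>\<^bsub>add_monoid R\<^esub> b \<in> I" using ad by simp
  qed
  show ?thesis
  proof (rule idealI[OF ring_axioms sg])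
    fix a x assume "a \<in> I" "x \<in> carrier R"
    then show "a \<otimes> x \<in> I" by (rule mu)
    then show "x \<otimes> a \<in> I" using \<open>a \<in> I\<close> \<open>x \<in> carrier R\<close> sub m_comm by (metis subsetD)
  qed
qed

section \<open>Generic facts on Tambara ideals\<close>

lemma ti_ideal: "is_tideal G T I \<Longrightarrow> subgroup H G \<Longrightarrow> ideal (I H) (tlev T H)"
  unfolding is_tideal_def by (drule conjunct1) (erule allE, erule mp)
lemma ti_cl: "is_tideal G T I \<Longrightarrow> subgroup K G \<Longrightarrow> subgroup H G \<Longrightarrow> K \<subseteq> H \<Longrightarrow>
   (\<forall>x\<in>I H. tres T K H x \<in> I K) \<and> (\<forall>x\<in>I K. ttr T K H x \<in> I H) \<and> (\<forall>x\<in>I K. tnm T K H x \<in> I H)"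
  unfolding is_tideal_def apply (drule conjunct2, drule conjunct1) apply (drule spec[of _ K], drule spec[of _ H]) by simp
lemma ti_res: "is_tideal G T I \<Longrightarrow> subgroup K G \<Longrightarrow> subgroup H G \<Longrightarrow> K \<subseteq> H \<Longrightarrow> x \<in> I H \<Longrightarrow> tres T K H x \<in> I K"
  using ti_cl by blast
lemma ti_tr: "is_tideal G T I \<Longrightarrow> subgroup K G \<Longrightarrow> subgroup H G \<Longrightarrow> K \<subseteq> H \<Longrightarrow> x \<in> I K \<Longrightarrow> ttr T K H x \<in> I H"
  using ti_cl by blast
lemma ti_nm: "is_tideal G T I \<Longrightarrow> subgroup K G \<Longrightarrow> subgroup H G \<Longrightarrow> K \<subseteq> H \<Longrightarrow> x \<in> I K \<Longrightarrow> tnm T K H x \<in> I H"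
  using ti_cl by blast
lemma ti_cj: "is_tideal G T I \<Longrightarrow> subgroup H G \<Longrightarrow> g \<in> carrier G \<Longrightarrow> x \<in> I H \<Longrightarrow> tcj T g H x \<in> I (conjg G g H)"
  unfolding is_tideal_def by (drule conjunct2, drule conjunct2) (erule allE, erule allE, erule impE, assumption, erule impE, assumption, erule bspec, assumption)
lemma ti_car: "is_tideal G T I \<Longrightarrow> subgroup H G \<Longrightarrow> I H \<subseteq> carrier (tlev T H)"
  by (rule additive_subgroup.a_subset[OF ideal.axioms(1)[OF ti_ideal]])
lemma ti_mul: "is_tideal G T I \<Longrightarrow> subgroup H G \<Longrightarrow> a \<in> carrier (tlev T H) \<Longrightarrow> x \<in> I H \<Longrightarrow> a \<otimes>\<^bsub>tlev T H\<^esub> x \<in> I H"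
  by (rule ideal.I_l_closed[OF ti_ideal])
lemma ti_mulr: "is_tideal G T I \<Longrightarrow> subgroup H G \<Longrightarrow> a \<in> carrier (tlev T H) \<Longrightarrow> x \<in> I H \<Longrightarrow> x \<otimes>\<^bsub>tlev T H\<^esub> a \<in> I H"
  by (rule ideal.I_r_closed[OF ti_ideal])
lemma ti_add: "is_tideal G T I \<Longrightarrow> subgroup H G \<Longrightarrow> a \<in> I H \<Longrightarrow> b \<in> I H \<Longrightarrow> a \<oplus>\<^bsub>tlev T H\<^esub> b \<in> I H"
  by (rule additive_subgroup.a_closed[OF ideal.axioms(1)[OF ti_ideal]])
lemma ti_zero: "is_tideal G T I \<Longrightarrow> subgroup H G \<Longrightarrow> \<zero>\<^bsub>tlev T H\<^esub> \<in> I H"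
  by (rule additive_subgroup.zero_closed[OF ideal.axioms(1)[OF ti_ideal]])

lemma tgen_mem: "x \<in> tgen G T A L \<longleftrightarrow> (\<forall>I. is_tideal G T I \<and> (\<forall>M. subgroup M G \<longrightarrow> A M \<subseteq> I M) \<longrightarrow> x \<in> I L)"
  unfolding tgen_def by auto

lemma tgen_least:
  assumes I: "is_tideal G T I" and A: "\<And>M. subgroup M G \<Longrightarrow> A M \<subseteq> I M"
  shows "tgen G T A L \<subseteq> I L"
proof
  fix x assume "x \<in> tgen G T A L"
  then have "\<forall>I. is_tideal G T I \<and> (\<forall>M. subgroup M G \<longrightarrow> A M \<subseteq> I M) \<longrightarrow> x \<in> I L" by (simp only: tgen_mem)
  then show "x \<in> I L" using I A by blast
qed

lemma tgen_gen: "subgroup L G \<Longrightarrow> A L \<subseteq> tgen G T A L"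
  unfolding tgen_def by blast

lemma tgen_closure:
  assumes f: "\<And>I y. is_tideal G T I \<Longrightarrow> y \<in> I H \<Longrightarrow> f y \<in> I K" and x: "x \<in> tgen G T A H"
  shows "f x \<in> tgen G T A K"
proof -
  have h: "\<forall>I. is_tideal G T I \<and> (\<forall>M. subgroup M G \<longrightarrow> A M \<subseteq> I M) \<longrightarrow> x \<in> I H"
    using x by (simp only: tgen_mem)
  show ?thesis unfolding tgen_mem
  proof (intro allI impI)
    fix I assume P: "is_tideal G T I \<and> (\<forall>M. subgroup M G \<longrightarrow> A M \<subseteq> I M)"
    then have "x \<in> I H" using h by blast
    then show "f x \<in> I K" using f P by blast
  qed
qed


locale tamb = group G for G :: "'g monoid" +
  fixes T :: "('g,'a) tambara_data"
  assumes fin: "finite (carrier G)" and tam: "is_tambara G T"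
begin

lemmas AX = tam[unfolded is_tambara_def]
lemmas A1 = AX[THEN conjunct1]
lemmas A2 = AX[THEN conjunct2, THEN conjunct1]
lemmas A3 = AX[THEN conjunct2, THEN conjunct2, THEN conjunct1]
lemmas A4 = AX[THEN conjunct2, THEN conjunct2, THEN conjunct2, THEN conjunct1]
lemmas A5 = AX[THEN conjunct2, THEN conjunct2, THEN conjunct2, THEN conjunct2, THEN conjunct1]
lemmas A6 = AX[THEN conjunct2, THEN conjunct2, THEN conjunct2, THEN conjunct2, THEN conjunct2, THEN conjunct1]
lemmas A7 = AX[THEN conjunct2, THEN conjunct2, THEN conjunct2, THEN conjunct2, THEN conjunct2, THEN conjunct2, THEN conjunct1]
lemmas A8 = AX[THEN conjunct2, THEN conjunct2, THEN conjunct2, THEN conjunct2, THEN conjunct2, THEN conjunct2, THEN conjunct2, THEN conjunct1]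
lemmas A9 = AX[THEN conjunct2, THEN conjunct2, THEN conjunct2, THEN conjunct2, THEN conjunct2, THEN conjunct2, THEN conjunct2, THEN conjunct2, THEN conjunct1]
lemmas A10 = AX[THEN conjunct2, THEN conjunct2, THEN conjunct2, THEN conjunct2, THEN conjunct2, THEN conjunct2, THEN conjunct2, THEN conjunct2, THEN conjunct2, THEN conjunct1]
lemmas A11 = AX[THEN conjunct2, THEN conjunct2, THEN conjunct2, THEN conjunct2, THEN conjunct2, THEN conjunct2, THEN conjunct2, THEN conjunct2, THEN conjunct2, THEN conjunct2, THEN conjunct1]
lemmas A12 = AX[THEN conjunct2, THEN conjunct2, THEN conjunct2, THEN conjunct2, THEN conjunct2, THEN conjunct2, THEN conjunct2, THEN conjunct2, THEN conjunct2, THEN conjunct2, THEN conjunct2, THEN conjunct1]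
lemmas A13 = AX[THEN conjunct2, THEN conjunct2, THEN conjunct2, THEN conjunct2, THEN conjunct2, THEN conjunct2, THEN conjunct2, THEN conjunct2, THEN conjunct2, THEN conjunct2, THEN conjunct2, THEN conjunct2, THEN conjunct1]
lemmas A14 = AX[THEN conjunct2, THEN conjunct2, THEN conjunct2, THEN conjunct2, THEN conjunct2, THEN conjunct2, THEN conjunct2, THEN conjunct2, THEN conjunct2, THEN conjunct2, THEN conjunct2, THEN conjunct2, THEN conjunct2, THEN conjunct1]
lemmas A15 = AX[THEN conjunct2, THEN conjunct2, THEN conjunct2, THEN conjunct2, THEN conjunct2, THEN conjunct2, THEN conjunct2, THEN conjunct2, THEN conjunct2, THEN conjunct2, THEN conjunct2, THEN conjunct2, THEN conjunct2, THEN conjunct2, THEN conjunct1]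
lemmas A16 = AX[THEN conjunct2, THEN conjunct2, THEN conjunct2, THEN conjunct2, THEN conjunct2, THEN conjunct2, THEN conjunct2, THEN conjunct2, THEN conjunct2, THEN conjunct2, THEN conjunct2, THEN conjunct2, THEN conjunct2, THEN conjunct2, THEN conjunct2, THEN conjunct1]
lemmas A17 = AX[THEN conjunct2, THEN conjunct2, THEN conjunct2, THEN conjunct2, THEN conjunct2, THEN conjunct2, THEN conjunct2, THEN conjunct2, THEN conjunct2, THEN conjunct2, THEN conjunct2, THEN conjunct2, THEN conjunct2, THEN conjunct2, THEN conjunct2, THEN conjunct2, THEN conjunct1]
lemmas A18 = AX[THEN conjunct2, THEN conjunct2, THEN conjunct2, THEN conjunct2, THEN conjunct2, THEN conjunct2, THEN conjunct2, THEN conjunct2, THEN conjunct2, THEN conjunct2, THEN conjunct2, THEN conjunct2, THEN conjunct2, THEN conjunct2, THEN conjunct2, THEN conjunct2, THEN conjunct2, THEN conjunct1]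
lemmas A19 = AX[THEN conjunct2, THEN conjunct2, THEN conjunct2, THEN conjunct2, THEN conjunct2, THEN conjunct2, THEN conjunct2, THEN conjunct2, THEN conjunct2, THEN conjunct2, THEN conjunct2, THEN conjunct2, THEN conjunct2, THEN conjunct2, THEN conjunct2, THEN conjunct2, THEN conjunct2, THEN conjunct2]

lemma cr: "subgroup H G \<Longrightarrow> cring (tlev T H)" using A1 by blast
lemma rg: "subgroup H G \<Longrightarrow> ring (tlev T H)" using cr cring.axioms(1) by blast
lemma res_hom: "subgroup K G \<Longrightarrow> subgroup H G \<Longrightarrow> K \<subseteq> H \<Longrightarrow> tres T K H \<in> ring_hom (tlev T H) (tlev T K)"
  using A2 by blast
lemma res_id: "subgroup H G \<Longrightarrow> x \<in> carrier (tlev T H) \<Longrightarrow> tres T H H x = x" using A3 by blast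
lemma res_comp: "subgroup L G \<Longrightarrow> subgroup K G \<Longrightarrow> subgroup H G \<Longrightarrow> L \<subseteq> K \<Longrightarrow> K \<subseteq> H \<Longrightarrow>
   x \<in> carrier (tlev T H) \<Longrightarrow> tres T L K (tres T K H x) = tres T L H x" using A4 by blast
lemma tr_car: "subgroup K G \<Longrightarrow> subgroup H G \<Longrightarrow> K \<subseteq> H \<Longrightarrow> x \<in> carrier (tlev T K) \<Longrightarrow> ttr T K H x \<in> carrier (tlev T H)"
  using A5 by blast
lemma tr_add: "subgroup K G \<Longrightarrow> subgroup H G \<Longrightarrow> K \<subseteq> H \<Longrightarrow> x \<in> carrier (tlev T K) \<Longrightarrow> y \<in> carrier (tlev T K) \<Longrightarrow>
   ttr T K H (x \<oplus>\<^bsub>tlev T K\<^esub> y) = ttr T K H x \<oplus>\<^bsub>tlev T H\<^esub> ttr T K H y"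
  using A5 by blast
lemma tr_id: "subgroup H G \<Longrightarrow> x \<in> carrier (tlev T H) \<Longrightarrow> ttr T H H x = x" using A6 by blast
lemma tr_comp: "subgroup L G \<Longrightarrow> subgroup K G \<Longrightarrow> subgroup H G \<Longrightarrow> L \<subseteq> K \<Longrightarrow> K \<subseteq> H \<Longrightarrow>
   x \<in> carrier (tlev T L) \<Longrightarrow> ttr T K H (ttr T L K x) = ttr T L H x" using A7 by blast
lemma nm_car: "subgroup K G \<Longrightarrow> subgroup H G \<Longrightarrow> K \<subseteq> H \<Longrightarrow> x \<in> carrier (tlev T K) \<Longrightarrow> tnm T K H x \<in> carrier (tlev T H)"
  using A8 by blast
lemma nm_mult: "subgroup K G \<Longrightarrow> subgroup H G \<Longrightarrow> K \<subseteq> H \<Longrightarrow> x \<in> carrier (tlev T K) \<Longrightarrow> y \<in> carrier (tlev T K) \<Longrightarrow>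
   tnm T K H (x \<otimes>\<^bsub>tlev T K\<^esub> y) = tnm T K H x \<otimes>\<^bsub>tlev T H\<^esub> tnm T K H y"
  using A8 by blast
lemma nm_one: "subgroup K G \<Longrightarrow> subgroup H G \<Longrightarrow> K \<subseteq> H \<Longrightarrow> tnm T K H \<one>\<^bsub>tlev T K\<^esub> = \<one>\<^bsub>tlev T H\<^esub>"
  using A8 by blast
lemma nm_zero: "subgroup K G \<Longrightarrow> subgroup H G \<Longrightarrow> K \<subseteq> H \<Longrightarrow> tnm T K H \<zero>\<^bsub>tlev T K\<^esub> = \<zero>\<^bsub>tlev T H\<^esub>"
  using A8 by blast
lemma cj_hom: "subgroup H G \<Longrightarrow> g \<in> carrier G \<Longrightarrow> tcj T g H \<in> ring_hom (tlev T H) (tlev T (conjg G g H))"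
  using A11 by blast
lemma cj_comp: "subgroup H G \<Longrightarrow> g \<in> carrier G \<Longrightarrow> g' \<in> carrier G \<Longrightarrow> x \<in> carrier (tlev T H) \<Longrightarrow>
   tcj T (g \<otimes>\<^bsub>G\<^esub> g') H x = tcj T g (conjg G g' H) (tcj T g' H x)"
  using A12 by blast
lemma cj_inner: "subgroup H G \<Longrightarrow> h \<in> H \<Longrightarrow> x \<in> carrier (tlev T H) \<Longrightarrow> tcj T h H x = x"
  using A13 by blast
lemma cj_res: "subgroup K G \<Longrightarrow> subgroup H G \<Longrightarrow> K \<subseteq> H \<Longrightarrow> g \<in> carrier G \<Longrightarrow> x \<in> carrier (tlev T H) \<Longrightarrow>
   tcj T g K (tres T K H x) = tres T (conjg G g K) (conjg G g H) (tcj T g H x)"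
  using A14 by blast
lemma cj_tr: "subgroup K G \<Longrightarrow> subgroup H G \<Longrightarrow> K \<subseteq> H \<Longrightarrow> g \<in> carrier G \<Longrightarrow> x \<in> carrier (tlev T K) \<Longrightarrow>
   tcj T g H (ttr T K H x) = ttr T (conjg G g K) (conjg G g H) (tcj T g K x)"
  using A14 by blast
lemma cj_nm: "subgroup K G \<Longrightarrow> subgroup H G \<Longrightarrow> K \<subseteq> H \<Longrightarrow> g \<in> carrier G \<Longrightarrow> x \<in> carrier (tlev T K) \<Longrightarrow>
   tcj T g H (tnm T K H x) = tnm T (conjg G g K) (conjg G g H) (tcj T g K x)"
  using A14 by blast
lemma frob: "subgroup K G \<Longrightarrow> subgroup H G \<Longrightarrow> K \<subseteq> H \<Longrightarrow> a \<in> carrier (tlev T K) \<Longrightarrow> b \<in> carrier (tlev T H) \<Longrightarrow>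
   ttr T K H (a \<otimes>\<^bsub>tlev T K\<^esub> tres T K H b) = ttr T K H a \<otimes>\<^bsub>tlev T H\<^esub> b"
  using A15 by blast
lemmas mackey = A16[rule_format]
lemmas exps = A18[rule_format]
lemmas expt = A19[rule_format]

lemma res_car: "subgroup K G \<Longrightarrow> subgroup H G \<Longrightarrow> K \<subseteq> H \<Longrightarrow> x \<in> carrier (tlev T H) \<Longrightarrow> tres T K H x \<in> carrier (tlev T K)"
  by (rule ring_hom_closed[OF res_hom])
lemma cj_car: "subgroup H G \<Longrightarrow> g \<in> carrier G \<Longrightarrow> x \<in> carrier (tlev T H) \<Longrightarrow> tcj T g H x \<in> carrier (tlev T (conjg G g H))"
  by (rule ring_hom_closed[OF cj_hom])
lemma res_zero: "subgroup K G \<Longrightarrow> subgroup H G \<Longrightarrow> K \<subseteq> H \<Longrightarrow> tres T K H \<zero>\<^bsub>tlev T H\<^esub> = \<zero>\<^bsub>tlev T K\<^esub>"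
  by (rule ring_hom_zero[OF res_hom rg rg])
lemma cj_zero: "subgroup H G \<Longrightarrow> g \<in> carrier G \<Longrightarrow> tcj T g H \<zero>\<^bsub>tlev T H\<^esub> = \<zero>\<^bsub>tlev T (conjg G g H)\<^esub>"
  by (rule ring_hom_zero[OF cj_hom rg rg[OF conjg_subgroup]])
lemma res_add: "subgroup K G \<Longrightarrow> subgroup H G \<Longrightarrow> K \<subseteq> H \<Longrightarrow> x \<in> carrier (tlev T H) \<Longrightarrow> y \<in> carrier (tlev T H) \<Longrightarrow>
   tres T K H (x \<oplus>\<^bsub>tlev T H\<^esub> y) = tres T K H x \<oplus>\<^bsub>tlev T K\<^esub> tres T K H y"
  by (rule ring_hom_add[OF res_hom])
lemma res_mult: "subgroup K G \<Longrightarrow> subgroup H G \<Longrightarrow> K \<subseteq> H \<Longrightarrow> x \<in> carrier (tlev T H) \<Longrightarrow> y \<in> carrier (tlev T H) \<Longrightarrow>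
   tres T K H (x \<otimes>\<^bsub>tlev T H\<^esub> y) = tres T K H x \<otimes>\<^bsub>tlev T K\<^esub> tres T K H y"
  by (rule ring_hom_mult[OF res_hom])
lemma cj_add: "subgroup H G \<Longrightarrow> g \<in> carrier G \<Longrightarrow> x \<in> carrier (tlev T H) \<Longrightarrow> y \<in> carrier (tlev T H) \<Longrightarrow>
   tcj T g H (x \<oplus>\<^bsub>tlev T H\<^esub> y) = tcj T g H x \<oplus>\<^bsub>tlev T (conjg G g H)\<^esub> tcj T g H y"
  by (rule ring_hom_add[OF cj_hom])
lemma cj_mult: "subgroup H G \<Longrightarrow> g \<in> carrier G \<Longrightarrow> x \<in> carrier (tlev T H) \<Longrightarrow> y \<in> carrier (tlev T H) \<Longrightarrow>
   tcj T g H (x \<otimes>\<^bsub>tlev T H\<^esub> y) = tcj T g H x \<otimes>\<^bsub>tlev T (conjg G g H)\<^esub> tcj T g H y"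
  by (rule ring_hom_mult[OF cj_hom])

lemma tr_zero: assumes "subgroup K G" "subgroup H G" "K \<subseteq> H"
  shows "ttr T K H \<zero>\<^bsub>tlev T K\<^esub> = \<zero>\<^bsub>tlev T H\<^esub>"
proof -
  interpret RK: cring "tlev T K" using cr assms by blast
  interpret RH: cring "tlev T H" using cr assms by blast
  have c: "ttr T K H \<zero>\<^bsub>tlev T K\<^esub> \<in> carrier (tlev T H)" using tr_car assms RK.zero_closed by blast
  have "ttr T K H \<zero>\<^bsub>tlev T K\<^esub> = ttr T K H \<zero>\<^bsub>tlev T K\<^esub> \<oplus>\<^bsub>tlev T H\<^esub> ttr T K H \<zero>\<^bsub>tlev T K\<^esub>"
    using tr_add[OF assms RK.zero_closed RK.zero_closed] by simp
  then show ?thesis using c RH.add.l_cancel_one'[OF c c] by simp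
qed

end


locale zfam = tamb G T for G :: "'g monoid" and T :: "('g,'a) tambara_data" +
  fixes Z :: "'g set \<Rightarrow> 'a set"
  assumes Zcar: "subgroup L G \<Longrightarrow> Z L \<subseteq> carrier (tlev T L)"
  and Zres: "subgroup K G \<Longrightarrow> subgroup L G \<Longrightarrow> K \<subseteq> L \<Longrightarrow> z \<in> Z L \<Longrightarrow> tres T K L z \<in> Z K"
  and Zcj: "subgroup L G \<Longrightarrow> g \<in> carrier G \<Longrightarrow> z \<in> Z L \<Longrightarrow> tcj T g L z \<in> Z (conjg G g L)"
  and Znm: "subgroup K G \<Longrightarrow> subgroup L G \<Longrightarrow> K \<subseteq> L \<Longrightarrow> z \<in> Z K \<Longrightarrow> tnm T K L z \<in> Z L"
  and Zmul: "subgroup L G \<Longrightarrow> z \<in> Z L \<Longrightarrow> s \<in> carrier (tlev T L) \<Longrightarrow> z \<otimes>\<^bsub>tlev T L\<^esub> s \<in> Z L"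
begin

inductive vs :: "'g set \<Rightarrow> 'a \<Rightarrow> bool" where
  vs0: "subgroup L G \<Longrightarrow> vs L \<zero>\<^bsub>tlev T L\<^esub>"
| vstr: "subgroup K G \<Longrightarrow> subgroup L G \<Longrightarrow> K \<subseteq> L \<Longrightarrow> z \<in> Z K \<Longrightarrow> vs L (ttr T K L z)"
| vsadd: "vs L a \<Longrightarrow> vs L b \<Longrightarrow> vs L (a \<oplus>\<^bsub>tlev T L\<^esub> b)"

lemma vs_sub: "vs L v \<Longrightarrow> subgroup L G \<and> v \<in> carrier (tlev T L)"
proof (induction rule: vs.induct)
  case (vs0 L) then show ?case using cring.cring_simprules(2)[OF cr] by blast
next
  case (vstr K L z) then show ?case using tr_car Zcar by blast
next
  case (vsadd L a b) then show ?case using cring.cring_simprules(1)[OF cr] by blast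
qed

lemma vs_Z: "subgroup L G \<Longrightarrow> z \<in> Z L \<Longrightarrow> vs L z"
proof -
  assume L: "subgroup L G" and z: "z \<in> Z L"
  have "ttr T L L z = z" using tr_id[OF L] Zcar[OF L] z by blast
  then show ?thesis using vstr[OF L L _ z] by simp
qed

lemma vs_mul: "vs L v \<Longrightarrow> s \<in> carrier (tlev T L) \<Longrightarrow> vs L (v \<otimes>\<^bsub>tlev T L\<^esub> s)"
proof (induction arbitrary: s rule: vs.induct)
  case (vs0 L)
  then have "\<zero>\<^bsub>tlev T L\<^esub> \<otimes>\<^bsub>tlev T L\<^esub> s = \<zero>\<^bsub>tlev T L\<^esub>" using ring.ring_simprules(24)[OF rg] by blast
  then show ?case using vs.vs0[OF vs0(1)] by simp
next
  case (vstr K L z)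
  have zc: "z \<in> carrier (tlev T K)" using vstr Zcar by blast
  have "ttr T K L z \<otimes>\<^bsub>tlev T L\<^esub> s = ttr T K L (z \<otimes>\<^bsub>tlev T K\<^esub> tres T K L s)"
    using frob[OF vstr(1-3) zc vstr(5)] by simp
  moreover have "z \<otimes>\<^bsub>tlev T K\<^esub> tres T K L s \<in> Z K" using Zmul vstr res_car by blast
  ultimately show ?case using vs.vstr vstr by metis
next
  case (vsadd L a b)
  have a: "a \<in> carrier (tlev T L)" and b: "b \<in> carrier (tlev T L)" and L: "subgroup L G"
    using vs_sub vsadd by blast+
  have "(a \<oplus>\<^bsub>tlev T L\<^esub> b) \<otimes>\<^bsub>tlev T L\<^esub> s = a \<otimes>\<^bsub>tlev T L\<^esub> s \<oplus>\<^bsub>tlev T L\<^esub> b \<otimes>\<^bsub>tlev T L\<^esub> s"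
    using ring.ring_simprules(13)[OF rg[OF L] a b vsadd(5)] .
  then show ?case using vsadd vs.vsadd by metis
qed

lemma vs_tr: "vs K v \<Longrightarrow> subgroup H G \<Longrightarrow> K \<subseteq> H \<Longrightarrow> vs H (ttr T K H v)"
proof (induction rule: vs.induct)
  case (vs0 L) then show ?case using tr_zero vs.vs0 by metis
next
  case (vstr K L z)
  have "z \<in> carrier (tlev T K)" using vstr Zcar by blast
  then have "ttr T L H (ttr T K L z) = ttr T K H z" using tr_comp vstr by blast
  then show ?case using vs.vstr vstr by (metis order_trans)
next
  case (vsadd L a b)
  have a: "a \<in> carrier (tlev T L)" and b: "b \<in> carrier (tlev T L)" and L: "subgroup L G"
    using vs_sub vsadd by blast+
  then show ?case using tr_add[OF L vsadd(5,6) a b] vsadd vs.vsadd by metis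
qed

lemma vs_cj: "vs L v \<Longrightarrow> g \<in> carrier G \<Longrightarrow> vs (conjg G g L) (tcj T g L v)"
proof (induction rule: vs.induct)
  case (vs0 L) then show ?case using cj_zero vs.vs0 conjg_subgroup by metis
next
  case (vstr K L z)
  have "z \<in> carrier (tlev T K)" using vstr Zcar by blast
  then have e: "tcj T g L (ttr T K L z) = ttr T (conjg G g K) (conjg G g L) (tcj T g K z)" using cj_tr vstr by blast
  have "tcj T g K z \<in> Z (conjg G g K)" using Zcj vstr by blast
  then show ?case unfolding e using vs.vstr vstr conjg_subgroup conjg_mono by metis
next
  case (vsadd L a b)
  have a: "a \<in> carrier (tlev T L)" and b: "b \<in> carrier (tlev T L)" and L: "subgroup L G"
    using vs_sub vsadd by blast+
  then show ?case using cj_add[OF L vsadd(5) a b] vsadd vs.vsadd by metis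
qed

lemma vs_finsum:
  assumes L: "subgroup L G" and f: "\<And>i. i \<in> I \<Longrightarrow> vs L (f i)"
  shows "vs L (finsum (tlev T L) f I)"
  using f
proof (induction I rule: infinite_finite_induct)
  interpret R: cring "tlev T L" using cr[OF L] .
  case (infinite A)
  then show ?case using R.finsum_infinite vs0[OF L] by metis
next
  interpret R: cring "tlev T L" using cr[OF L] .
  case empty
  then show ?case using R.finsum_empty vs0[OF L] by metis
next
  interpret R: cring "tlev T L" using cr[OF L] .
  case (insert x F)
  have fc: "f \<in> F \<rightarrow> carrier (tlev T L)" "f x \<in> carrier (tlev T L)" using insert vs_sub by blast+
  have "finsum (tlev T L) f (insert x F) = f x \<oplus>\<^bsub>tlev T L\<^esub> finsum (tlev T L) f F"
    using R.finsum_insert[OF insert(1,2) fc] .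
  then show ?case using insert vsadd by simp
qed

lemma finprod_single:
  assumes "cring R" "f x \<in> carrier R"
  shows "finprod R f {x} = f x"
proof -
  interpret cring R by fact
  show ?thesis using finprod_insert[of "{}" x f] assms(2) by simp
qed

lemma vs_finprod:
  assumes L: "subgroup L G" and fin: "finite I" and ne: "I \<noteq> {}" and f: "\<And>i. i \<in> I \<Longrightarrow> vs L (f i)"
  shows "vs L (finprod (tlev T L) f I)"
  using fin ne f
proof (induction I rule: finite_ne_induct)
  case (singleton x)
  have "f x \<in> carrier (tlev T L)" using singleton vs_sub by blast
  then have "finprod (tlev T L) f {x} = f x" by (rule finprod_single[OF cr[OF L]])
  then show ?case using singleton by simp
next
  interpret R: cring "tlev T L" using cr[OF L] .
  case (insert x F)
  have fc: "f \<in> F \<rightarrow> carrier (tlev T L)" "f x \<in> carrier (tlev T L)" using insert vs_sub by blast+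
  have "finprod (tlev T L) f (insert x F) = f x \<otimes>\<^bsub>tlev T L\<^esub> finprod (tlev T L) f F"
    using R.finprod_insert[OF insert(1,3) fc] .
  moreover have "finprod (tlev T L) f F \<in> carrier (tlev T L)"
    using R.finprod_closed[OF fc(1)] by simp
  ultimately show ?case using insert vs_mul by simp
qed

lemma Z_finprod:
  assumes L: "subgroup L G" and fin: "finite I" and ne: "I \<noteq> {}" and f: "\<And>i. i \<in> I \<Longrightarrow> f i \<in> Z L"
  shows "finprod (tlev T L) f I \<in> Z L"
  using fin ne f
proof (induction I rule: finite_ne_induct)
  case (singleton x)
  have "f x \<in> carrier (tlev T L)" using singleton Zcar[OF L] by blast
  then have "finprod (tlev T L) f {x} = f x" by (rule finprod_single[OF cr[OF L]])
  then show ?case using singleton by simp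
next
  interpret R: cring "tlev T L" using cr[OF L] .
  case (insert x F)
  have fc: "f \<in> F \<rightarrow> carrier (tlev T L)" "f x \<in> carrier (tlev T L)" using insert Zcar[OF L] by blast+
  have "finprod (tlev T L) f (insert x F) = f x \<otimes>\<^bsub>tlev T L\<^esub> finprod (tlev T L) f F"
    using R.finprod_insert[OF insert(1,3) fc] .
  moreover have "finprod (tlev T L) f F \<in> carrier (tlev T L)"
    using R.finprod_closed[OF fc(1)] by simp
  ultimately show ?case using insert Zmul[OF L] by simp
qed

lemma vs_res: "vs H v \<Longrightarrow> subgroup K G \<Longrightarrow> K \<subseteq> H \<Longrightarrow> vs K (tres T K H v)"
proof (induction rule: vs.induct)
  case (vs0 L) then show ?case using res_zero vs.vs0 by metis
next
  case (vstr K0 H z)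
  have zc: "z \<in> carrier (tlev T K0)" using vstr Zcar by blast
  have e: "tres T K H (ttr T K0 H z) = finsum (tlev T K)
      (\<lambda>D. ttr T (K \<inter> conjg G (rep D) K0) K
             (tcj T (rep D) (conjg G (inv\<^bsub>G\<^esub> (rep D)) K \<inter> K0)
               (tres T (conjg G (inv\<^bsub>G\<^esub> (rep D)) K \<inter> K0) K0 z)))
      (dcosets G H K K0)"
    using mackey[OF vstr(5) vstr(1) vstr(2) vstr(6) vstr(3) zc] .
  show ?case unfolding e
  proof (rule vs_finsum[OF vstr(5)])
    fix D assume D: "D \<in> dcosets G H K K0"
    define d where "d = rep D"
    have d: "d \<in> carrier G" using dcos_rep[OF vstr(2) vstr(5) vstr(1) vstr(6) vstr(3) D] d_def by blast
    have id: "inv\<^bsub>G\<^esub> d \<in> carrier G" using d by simp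
    define W where "W = conjg G (inv\<^bsub>G\<^esub> d) K \<inter> K0"
    have W: "subgroup W G" unfolding W_def using subgroups_Inter_pair conjg_subgroup[OF vstr(5) id] vstr(1) by blast
    have WK0: "W \<subseteq> K0" unfolding W_def by blast
    have "tres T W K0 z \<in> Z W" using Zres[OF W vstr(1) WK0 vstr(4)] .
    then have zz: "tcj T d W (tres T W K0 z) \<in> Z (conjg G d W)" using Zcj[OF W d] by blast
    have Kc: "K \<subseteq> carrier G" "K0 \<subseteq> carrier G" using vstr subgroup.subset by blast+
    have e2: "conjg G d W = K \<inter> conjg G d K0" unfolding W_def using conjg_key[OF Kc d] .
    have S: "subgroup (K \<inter> conjg G d K0) G" using subgroups_Inter_pair conjg_subgroup[OF vstr(1) d] vstr(5) by blast
    show "vs K (ttr T (K \<inter> conjg G (rep D) K0) K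
             (tcj T (rep D) (conjg G (inv\<^bsub>G\<^esub> (rep D)) K \<inter> K0)
               (tres T (conjg G (inv\<^bsub>G\<^esub> (rep D)) K \<inter> K0) K0 z)))"
      using vs.vstr[OF S vstr(5) _ zz[unfolded e2]] unfolding d_def[symmetric] W_def[symmetric] by blast
  qed
next
  case (vsadd L a b)
  have a: "a \<in> carrier (tlev T L)" and b: "b \<in> carrier (tlev T L)" and L: "subgroup L G"
    using vs_sub vsadd by blast+
  then show ?case using res_add[OF vsadd(5) L vsadd(6) a b] vsadd vs.vsadd by metis
qed


lemma vs_nm_aux:
  assumes "vs A v" "x \<in> carrier G" "subgroup B G" "conjg G x A \<subseteq> B"
  shows "vs B (tnm T (conjg G x A) B (tcj T x A v))"
  using assms
proof (induction "card A" arbitrary: A v x B rule: less_induct)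
  case less
  have A: "subgroup A G" using less.prems(1) vs_sub by blast
  have Ac: "A \<subseteq> carrier G" using A subgroup.subset by blast
  have Q: "vs B' (tnm T (conjg G y W0) B' (tcj T y W0 (tres T W0 A c)))"
    if c: "vs A c" and IHc: "\<forall>x B. x \<in> carrier G \<longrightarrow> subgroup B G \<longrightarrow> conjg G x A \<subseteq> B \<longrightarrow>
             vs B (tnm T (conjg G x A) B (tcj T x A c))"
    and y: "y \<in> carrier G" and W0: "subgroup W0 G" and W0A: "W0 \<subseteq> A" and B': "subgroup B' G"
    and sub: "conjg G y W0 \<subseteq> B'" for c y W0 B'
  proof (cases "W0 = A")
    case True
    have "tres T A A c = c" using res_id[OF A] vs_sub[OF c] by blast
    then show ?thesis using IHc[rule_format, OF y B' sub[unfolded True]] True by simp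
  next
    case False
    then have "W0 \<subset> A" using W0A by blast
    then have "card W0 < card A" using psubset_card_mono finite_subset[OF Ac fin] by blast
    moreover have "vs W0 (tres T W0 A c)" using vs_res[OF c W0 W0A] .
    ultimately show ?thesis by (rule less.hyps[OF _ _ y B' sub])
  qed
  have main: "\<forall>x B. x \<in> carrier G \<longrightarrow> subgroup B G \<longrightarrow> conjg G x A \<subseteq> B \<longrightarrow>
             vs B (tnm T (conjg G x A) B (tcj T x A v))" if "vs L v" "L = A" for L v
    using that
  proof (induction rule: vs.induct)
    case (vs0 L)
    show ?case
    proof (intro allI impI)
      fix x B assume x: "x \<in> carrier G" and B: "subgroup B G" and sub: "conjg G x A \<subseteq> B"
      have K: "subgroup (conjg G x A) G" using conjg_subgroup[OF A x] .
      show "vs B (tnm T (conjg G x A) B (tcj T x A \<zero>\<^bsub>tlev T L\<^esub>))"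
        using cj_zero[OF A x] nm_zero[OF K B sub] vs.vs0[OF B] vs0 by simp
    qed
  next
    case (vstr K L z)
    then have KA: "K \<subseteq> A" and Ksub: "subgroup K G" and zZ: "z \<in> Z K" by auto
    have zc: "z \<in> carrier (tlev T K)" using zZ Zcar[OF Ksub] by blast
    show ?case
    proof (intro allI impI)
      fix x B assume x: "x \<in> carrier G" and B: "subgroup B G" and sub: "conjg G x A \<subseteq> B"
      define K' where "K' = conjg G x K"
      define A' where "A' = conjg G x A"
      define z' where "z' = tcj T x K z"
      have K': "subgroup K' G" unfolding K'_def using conjg_subgroup[OF Ksub x] .
      have A': "subgroup A' G" unfolding A'_def using conjg_subgroup[OF A x] .
      have K'A': "K' \<subseteq> A'" unfolding K'_def A'_def using conjg_mono[OF KA] .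
      have A'B: "A' \<subseteq> B" unfolding A'_def using sub .
      have z'Z: "z' \<in> Z K'" unfolding z'_def K'_def using Zcj[OF Ksub x zZ] .
      have z'c: "z' \<in> carrier (tlev T K')" using z'Z Zcar[OF K'] by blast
      have K'c: "K' \<subseteq> carrier G" using K' subgroup.subset by blast
      have e1: "tcj T x A (ttr T K A z) = ttr T K' A' z'"
        unfolding K'_def A'_def z'_def using cj_tr[OF Ksub A KA x zc] .
      have e2: "tnm T A' B (ttr T K' A' z') = 
          (\<Oplus>\<^bsub>tlev T B\<^esub>Orb\<in>horbits B (sact G B A') (sects G B A' K').
             let s = rep Orb; Hs = hstab B (sact G B A') s
             in ttr T Hs B
                 (\<Otimes>\<^bsub>tlev T Hs\<^esub>D\<in>dcosets G B Hs A'.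
                     let x = rep D; y = SOME y. y \<in> B \<and> s (l_coset G x A') = l_coset G y K'
                     in tnm T (Hs \<inter> conjg G y K') Hs
                         (tcj T y (conjg G (inv\<^bsub>G\<^esub> y) Hs \<inter> K')
                           (tres T (conjg G (inv\<^bsub>G\<^esub> y) Hs \<inter> K') K' z'))))"
        using expt[OF K' A' B K'A' A'B z'c] .
      have r: "vs B (tnm T A' B (ttr T K' A' z'))"
        unfolding e2
      proof (rule vs_finsum[OF B])
        fix Orb assume Orb: "Orb \<in> horbits B (sact G B A') (sects G B A' K')"
        let ?s = "rep Orb"
        let ?Hs = "hstab B (sact G B A') ?s"
        have s: "?s \<in> sects G B A' K'" using horbit_rep[OF B Orb sact_props(1)[OF B A' K']] .
        note hs = hstab_subgroup[OF B s sact_props(1)[OF B A' K'] sact_props(2)[OF B A' K'] sact_props(3)[OF B A' K']]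
        have Hs: "subgroup ?Hs G" by (rule hs(1))
        have HsB: "?Hs \<subseteq> B" by (rule hs(2))
        have Hsc: "?Hs \<subseteq> carrier G" using Hs subgroup.subset by blast
        have fac: "(let x = rep D; y = SOME y. y \<in> B \<and> ?s (l_coset G x A') = l_coset G y K'
                     in tnm T (?Hs \<inter> conjg G y K') ?Hs
                         (tcj T y (conjg G (inv\<^bsub>G\<^esub> y) ?Hs \<inter> K')
                           (tres T (conjg G (inv\<^bsub>G\<^esub> y) ?Hs \<inter> K') K' z'))) \<in> Z ?Hs"
          if D: "D \<in> dcosets G B ?Hs A'" for D
        proof -
          have xd: "rep D \<in> B" using dcos_rep[OF B Hs A' HsB A'B D] by blast
          have "l_coset G (rep D) A' \<in> lcos G B A'" unfolding lcos_def using xd by blast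
          then have "?s (l_coset G (rep D) A') \<in> lcos G B K'" using s unfolding sects_def by blast
          then have ex: "\<exists>y. y \<in> B \<and> ?s (l_coset G (rep D) A') = l_coset G y K'" unfolding lcos_def by blast
          define y where "y = (SOME y. y \<in> B \<and> ?s (l_coset G (rep D) A') = l_coset G y K')"
          have yB: "y \<in> B" unfolding y_def using someI_ex[OF ex] by blast
          have yc: "y \<in> carrier G" using yB B subgroup.subset by blast
          have iy: "inv\<^bsub>G\<^esub> y \<in> carrier G" using yc by simp
          define W where "W = conjg G (inv\<^bsub>G\<^esub> y) ?Hs \<inter> K'"
          have W: "subgroup W G" unfolding W_def using subgroups_Inter_pair conjg_subgroup[OF Hs iy] K' by blast
          have WK': "W \<subseteq> K'" unfolding W_def by blast
          have "tres T W K' z' \<in> Z W" using Zres[OF W K' WK' z'Z] .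
          then have zz: "tcj T y W (tres T W K' z') \<in> Z (conjg G y W)" using Zcj[OF W yc] by blast
          have eq: "conjg G y W = ?Hs \<inter> conjg G y K'" unfolding W_def using conjg_key[OF Hsc K'c yc] .
          have S: "subgroup (?Hs \<inter> conjg G y K') G" using subgroups_Inter_pair[OF Hs conjg_subgroup[OF K' yc]] .
          have "tnm T (?Hs \<inter> conjg G y K') ?Hs (tcj T y W (tres T W K' z')) \<in> Z ?Hs"
            using Znm[OF S Hs Int_lower1 zz[unfolded eq]] .
          then show ?thesis unfolding Let_def y_def[symmetric] W_def[symmetric] .
        qed
        have "vs B (ttr T ?Hs B (\<Otimes>\<^bsub>tlev T ?Hs\<^esub>D\<in>dcosets G B ?Hs A'.
                     let x = rep D; y = SOME y. y \<in> B \<and> ?s (l_coset G x A') = l_coset G y K'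
                     in tnm T (?Hs \<inter> conjg G y K') ?Hs
                         (tcj T y (conjg G (inv\<^bsub>G\<^esub> y) ?Hs \<inter> K')
                           (tres T (conjg G (inv\<^bsub>G\<^esub> y) ?Hs \<inter> K') K' z'))))"
          using vs.vstr[OF Hs B HsB Z_finprod[OF Hs dcos_fin[OF fin B Hs A' HsB A'B] dcos_ne[OF B] fac]] .
        then show "vs B (let s = rep Orb; Hs = hstab B (sact G B A') s
             in ttr T Hs B
                 (\<Otimes>\<^bsub>tlev T Hs\<^esub>D\<in>dcosets G B Hs A'.
                     let x = rep D; y = SOME y. y \<in> B \<and> s (l_coset G x A') = l_coset G y K'
                     in tnm T (Hs \<inter> conjg G y K') Hs
                         (tcj T y (conjg G (inv\<^bsub>G\<^esub> y) Hs \<inter> K')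
                           (tres T (conjg G (inv\<^bsub>G\<^esub> y) Hs \<inter> K') K' z'))))"
          by (simp only: Let_def)
      qed
      have LA: "L = A" using vstr.prems .
      show "vs B (tnm T (conjg G x A) B (tcj T x A (ttr T K L z)))"
        unfolding LA e1 using r unfolding A'_def .
    qed
  next
    case (vsadd L a b)
    have LA: "L = A" using vsadd.prems .
    have va: "vs A a" and vb: "vs A b" using vsadd.hyps LA by simp_all
    have IHa: "\<forall>x B. x \<in> carrier G \<longrightarrow> subgroup B G \<longrightarrow> conjg G x A \<subseteq> B \<longrightarrow>
             vs B (tnm T (conjg G x A) B (tcj T x A a))" using vsadd.IH(1)[OF LA] .
    have IHb: "\<forall>x B. x \<in> carrier G \<longrightarrow> subgroup B G \<longrightarrow> conjg G x A \<subseteq> B \<longrightarrow>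
             vs B (tnm T (conjg G x A) B (tcj T x A b))" using vsadd.IH(2)[OF LA] .
    have ac: "a \<in> carrier (tlev T A)" and bc: "b \<in> carrier (tlev T A)" using vs_sub[OF va] vs_sub[OF vb] by auto
    show ?case
    proof (intro allI impI)
      fix x B assume x: "x \<in> carrier G" and B: "subgroup B G" and sub: "conjg G x A \<subseteq> B"
      have ix: "inv\<^bsub>G\<^esub> x \<in> carrier G" using x by simp
      define K where "K = conjg G x A"
      have K: "subgroup K G" unfolding K_def using conjg_subgroup[OF A x] .
      have KB: "K \<subseteq> B" unfolding K_def using sub .
      have Kc: "K \<subseteq> carrier G" using K subgroup.subset by blast
      define a' where "a' = tcj T x A a"
      define b' where "b' = tcj T x A b"
      have a'c: "a' \<in> carrier (tlev T K)" unfolding a'_def K_def using cj_car[OF A x ac] .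
      have b'c: "b' \<in> carrier (tlev T K)" unfolding b'_def K_def using cj_car[OF A x bc] .
      have e1: "tcj T x A (a \<oplus>\<^bsub>tlev T A\<^esub> b) = a' \<oplus>\<^bsub>tlev T K\<^esub> b'"
        unfolding a'_def b'_def K_def using cj_add[OF A x ac bc] .
      have e2: "tnm T K B (a' \<oplus>\<^bsub>tlev T K\<^esub> b') =
          (\<Oplus>\<^bsub>tlev T B\<^esub>Orb\<in>horbits B (bact G B K) (bfuns G B K).
             let f = rep Orb; Hf = hstab B (bact G B K) f
             in ttr T Hf B
                 (\<Otimes>\<^bsub>tlev T Hf\<^esub>D\<in>dcosets G B Hf K.
                     let x = rep D
                     in tnm T (Hf \<inter> conjg G x K) Hf
                         (tcj T x (conjg G (inv\<^bsub>G\<^esub> x) Hf \<inter> K)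
                           (tres T (conjg G (inv\<^bsub>G\<^esub> x) Hf \<inter> K) K
                             (if f (l_coset G x K) then a' else b')))))"
        using exps[OF K B KB a'c b'c] .
      have r: "vs B (tnm T K B (a' \<oplus>\<^bsub>tlev T K\<^esub> b'))"
        unfolding e2
      proof (rule vs_finsum[OF B])
        fix Orb assume Orb: "Orb \<in> horbits B (bact G B K) (bfuns G B K)"
        let ?f = "rep Orb"
        let ?Hf = "hstab B (bact G B K) ?f"
        have f: "?f \<in> bfuns G B K" using horbit_rep[OF B Orb bact_props(1)[OF B K]] .
        note hs = hstab_subgroup[OF B f bact_props(1)[OF B K] bact_props(2)[OF B K] bact_props(3)[OF B K]]
        have Hf: "subgroup ?Hf G" by (rule hs(1))
        have HfB: "?Hf \<subseteq> B" by (rule hs(2))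
        have Hfc: "?Hf \<subseteq> carrier G" using Hf subgroup.subset by blast
        have fac: "vs ?Hf (let x = rep D
                     in tnm T (?Hf \<inter> conjg G x K) ?Hf
                         (tcj T x (conjg G (inv\<^bsub>G\<^esub> x) ?Hf \<inter> K)
                           (tres T (conjg G (inv\<^bsub>G\<^esub> x) ?Hf \<inter> K) K
                             (if ?f (l_coset G x K) then a' else b'))))"
          if D: "D \<in> dcosets G B ?Hf K" for D
        proof -
          define xd where "xd = rep D"
          have xdc: "xd \<in> carrier G" unfolding xd_def using dcos_rep[OF B Hf K HfB KB D] by blast
          have ixd: "inv\<^bsub>G\<^esub> xd \<in> carrier G" using xdc by simp
          define c where "c = (if ?f (l_coset G xd K) then a else b)"
          have vc: "vs A c" unfolding c_def using va vb by simp
          have IHc: "\<forall>x B. x \<in> carrier G \<longrightarrow> subgroup B G \<longrightarrow> conjg G x A \<subseteq> B \<longrightarrow>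
             vs B (tnm T (conjg G x A) B (tcj T x A c))"
            unfolding c_def using IHa IHb by (cases "?f (l_coset G xd K)") simp_all
          have cc: "c \<in> carrier (tlev T A)" unfolding c_def using ac bc by simp
          have ite: "(if ?f (l_coset G xd K) then a' else b') = tcj T x A c"
            unfolding c_def a'_def b'_def by simp
          define W where "W = conjg G (inv\<^bsub>G\<^esub> xd) ?Hf \<inter> K"
          have W: "subgroup W G" unfolding W_def using subgroups_Inter_pair[OF conjg_subgroup[OF Hf ixd] K] .
          have Wc: "W \<subseteq> carrier G" using W subgroup.subset by blast
          have WK: "W \<subseteq> K" unfolding W_def by blast
          define W0 where "W0 = conjg G (inv\<^bsub>G\<^esub> x) W"
          have W0: "subgroup W0 G" unfolding W0_def using conjg_subgroup[OF W ix] .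
          have W0c: "W0 \<subseteq> carrier G" using W0 subgroup.subset by blast
          have "W0 \<subseteq> conjg G (inv\<^bsub>G\<^esub> x) K" unfolding W0_def using conjg_mono[OF WK] .
          then have W0A: "W0 \<subseteq> A" unfolding K_def using conjg_inv_cancel(2)[OF Ac x] by simp
          have xW0: "conjg G x W0 = W" unfolding W0_def using conjg_inv_cancel(1)[OF Wc x] .
          have e3: "tres T W K (tcj T x A c) = tcj T x W0 (tres T W0 A c)"
            using cj_res[OF W0 A W0A x cc] unfolding xW0 K_def[symmetric] by simp
          have rc: "tres T W0 A c \<in> carrier (tlev T W0)" using res_car[OF W0 A W0A cc] .
          have e4: "tcj T xd W (tcj T x W0 (tres T W0 A c)) = tcj T (xd \<otimes>\<^bsub>G\<^esub> x) W0 (tres T W0 A c)"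
            using cj_comp[OF W0 xdc x rc] unfolding xW0 by simp
          have "conjg G xd W = ?Hf \<inter> conjg G xd K" unfolding W_def using conjg_key[OF Hfc Kc xdc] .
          moreover have "conjg G xd W = conjg G (xd \<otimes>\<^bsub>G\<^esub> x) W0"
            unfolding xW0[symmetric] using conjg_comp[OF W0c xdc x] .
          ultimately have e5: "?Hf \<inter> conjg G xd K = conjg G (xd \<otimes>\<^bsub>G\<^esub> x) W0" by simp
          have sub': "conjg G (xd \<otimes>\<^bsub>G\<^esub> x) W0 \<subseteq> ?Hf" using e5 by blast
          have "vs ?Hf (tnm T (conjg G (xd \<otimes>\<^bsub>G\<^esub> x) W0) ?Hf (tcj T (xd \<otimes>\<^bsub>G\<^esub> x) W0 (tres T W0 A c)))"
            by (rule Q[OF vc IHc m_closed[OF xdc x] W0 W0A Hf sub'])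
          then show ?thesis unfolding Let_def xd_def[symmetric] W_def[symmetric] ite e3 e4 e5 .
        qed
        have "vs B (ttr T ?Hf B (\<Otimes>\<^bsub>tlev T ?Hf\<^esub>D\<in>dcosets G B ?Hf K.
                     let x = rep D
                     in tnm T (?Hf \<inter> conjg G x K) ?Hf
                         (tcj T x (conjg G (inv\<^bsub>G\<^esub> x) ?Hf \<inter> K)
                           (tres T (conjg G (inv\<^bsub>G\<^esub> x) ?Hf \<inter> K) K
                             (if ?f (l_coset G x K) then a' else b')))))"
          using vs_tr[OF vs_finprod[OF Hf dcos_fin[OF fin B Hf K HfB KB] dcos_ne[OF B] fac] B HfB] .
        then show "vs B (let f = rep Orb; Hf = hstab B (bact G B K) f
             in ttr T Hf B
                 (\<Otimes>\<^bsub>tlev T Hf\<^esub>D\<in>dcosets G B Hf K.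
                     let x = rep D
                     in tnm T (Hf \<inter> conjg G x K) Hf
                         (tcj T x (conjg G (inv\<^bsub>G\<^esub> x) Hf \<inter> K)
                           (tres T (conjg G (inv\<^bsub>G\<^esub> x) Hf \<inter> K) K
                             (if f (l_coset G x K) then a' else b')))))"
          by (simp only: Let_def)
      qed
      show "vs B (tnm T (conjg G x A) B (tcj T x A (a \<oplus>\<^bsub>tlev T L\<^esub> b)))"
        using r unfolding LA e1 K_def .
    qed
  qed
  show ?case using main[OF less.prems(1) refl, rule_format, OF less.prems(2-4)] .
qed


lemma vs_nm: "vs K v \<Longrightarrow> subgroup H G \<Longrightarrow> K \<subseteq> H \<Longrightarrow> vs H (tnm T K H v)"
proof -
  assume v: "vs K v" and H: "subgroup H G" and KH: "K \<subseteq> H"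
  have K: "subgroup K G" using vs_sub[OF v] by blast
  have Kc: "K \<subseteq> carrier G" using K subgroup.subset by blast
  have e1: "conjg G \<one>\<^bsub>G\<^esub> K = K" using conjg_one[OF Kc] .
  have e2: "tcj T \<one>\<^bsub>G\<^esub> K v = v" using cj_inner[OF K subgroup.one_closed[OF K]] vs_sub[OF v] by blast
  show ?thesis using vs_nm_aux[OF v one_closed H] unfolding e1 e2 using KH by blast
qed

lemma V_tideal: "is_tideal G T (\<lambda>L. {v. vs L v})"
  unfolding is_tideal_def
proof (intro conjI allI impI ballI)
  fix H assume H: "subgroup H G"
  show "ideal {v. vs H v} (tlev T H)"
  proof (rule ideal_of_closed[OF cr[OF H]])
    show "{v. vs H v} \<subseteq> carrier (tlev T H)"
    proof
      fix v assume "v \<in> {v. vs H v}" then show "v \<in> carrier (tlev T H)" using vs_sub by simp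
    qed
    show "\<zero>\<^bsub>tlev T H\<^esub> \<in> {v. vs H v}" using vs0[OF H] by simp
    show "\<And>a b. a \<in> {v. vs H v} \<Longrightarrow> b \<in> {v. vs H v} \<Longrightarrow> a \<oplus>\<^bsub>tlev T H\<^esub> b \<in> {v. vs H v}"
      using vsadd by simp
    show "\<And>a x. a \<in> {v. vs H v} \<Longrightarrow> x \<in> carrier (tlev T H) \<Longrightarrow> a \<otimes>\<^bsub>tlev T H\<^esub> x \<in> {v. vs H v}"
      using vs_mul by simp
  qed
next
  fix K H x assume "subgroup K G" "subgroup H G" "K \<subseteq> H" "x \<in> {v. vs H v}"
  then show "tres T K H x \<in> {v. vs K v}" using vs_res by simp
next
  fix K H x assume "subgroup K G" "subgroup H G" "K \<subseteq> H" "x \<in> {v. vs K v}"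
  then show "ttr T K H x \<in> {v. vs H v}" using vs_tr by simp
next
  fix K H x assume "subgroup K G" "subgroup H G" "K \<subseteq> H" "x \<in> {v. vs K v}"
  then show "tnm T K H x \<in> {v. vs H v}" using vs_nm by simp
next
  fix H g x assume "subgroup H G" "g \<in> carrier G" "x \<in> {v. vs H v}"
  then show "tcj T g H x \<in> {v. vs (conjg G g H) v}" using vs_cj by simp
qed

lemma V_least:
  assumes I: "is_tideal G T I" and ZI: "\<And>L. subgroup L G \<Longrightarrow> Z L \<subseteq> I L"
  shows "vs L v \<Longrightarrow> v \<in> I L"
proof (induction rule: vs.induct)
  case (vs0 L)
  then show ?case by (rule ti_zero[OF I])
next
  case (vstr K L z)
  then have "z \<in> I K" using ZI by blast
  then show ?case by (rule ti_tr[OF I vstr(1-3)])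
next
  case (vsadd L a b)
  have L: "subgroup L G" using vs_sub[OF vsadd.hyps(1)] by blast
  show ?case by (rule ti_add[OF I L vsadd.IH])
qed

end

context tamb begin

lemma carrier_tideal: "is_tideal G T (\<lambda>L. carrier (tlev T L))"
  unfolding is_tideal_def
proof (intro conjI allI impI ballI)
  fix H assume H: "subgroup H G"
  interpret R: cring "tlev T H" using cr[OF H] .
  show "ideal (carrier (tlev T H)) (tlev T H)"
    by (rule R.oneideal)
next
  fix K H x assume "subgroup K G" "subgroup H G" "K \<subseteq> H" "x \<in> carrier (tlev T H)"
  then show "tres T K H x \<in> carrier (tlev T K)" using res_car by blast
next
  fix K H x assume "subgroup K G" "subgroup H G" "K \<subseteq> H" "x \<in> carrier (tlev T K)"
  then show "ttr T K H x \<in> carrier (tlev T H)" using tr_car by blast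
next
  fix K H x assume "subgroup K G" "subgroup H G" "K \<subseteq> H" "x \<in> carrier (tlev T K)"
  then show "tnm T K H x \<in> carrier (tlev T H)" using nm_car by blast
next
  fix H g x assume "subgroup H G" "g \<in> carrier G" "x \<in> carrier (tlev T H)"
  then show "tcj T g H x \<in> carrier (tlev T (conjg G g H))" using cj_car by blast
qed

lemma tgen_tideal:
  assumes AC: "\<And>L. subgroup L G \<Longrightarrow> A L \<subseteq> carrier (tlev T L)"
  shows "is_tideal G T (tgen G T A)"
  unfolding is_tideal_def
proof (intro conjI allI impI ballI)
  fix H assume H: "subgroup H G"
  interpret R: cring "tlev T H" using cr[OF H] .
  have e: "tgen G T A H = \<Inter>{I H | I. is_tideal G T I \<and> (\<forall>M. subgroup M G \<longrightarrow> A M \<subseteq> I M)}"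
    by (simp only: tgen_def)
  have ne: "carrier (tlev T H) \<in> {I H | I. is_tideal G T I \<and> (\<forall>M. subgroup M G \<longrightarrow> A M \<subseteq> I M)}"
    unfolding mem_Collect_eq by (rule exI[where x="\<lambda>L. carrier (tlev T L)"]) (simp add: carrier_tideal AC)
  show "ideal (tgen G T A H) (tlev T H)" unfolding e
  proof (rule R.i_Intersect)
    show "{I H |I. is_tideal G T I \<and> (\<forall>M. subgroup M G \<longrightarrow> A M \<subseteq> I M)} \<noteq> {}" using ne by blast
  next
    fix J assume "J \<in> {I H |I. is_tideal G T I \<and> (\<forall>M. subgroup M G \<longrightarrow> A M \<subseteq> I M)}"
    then obtain I where "J = I H" "is_tideal G T I" by blast
    then show "ideal J (tlev T H)" using ti_ideal[OF _ H] by simp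
  qed
next
  fix K H x assume K: "subgroup K G" and H: "subgroup H G" and KH: "K \<subseteq> H" and x: "x \<in> tgen G T A H"
  show "tres T K H x \<in> tgen G T A K" by (rule tgen_closure[OF ti_res[OF _ K H KH] x])
next
  fix K H x assume K: "subgroup K G" and H: "subgroup H G" and KH: "K \<subseteq> H" and x: "x \<in> tgen G T A K"
  show "ttr T K H x \<in> tgen G T A H" by (rule tgen_closure[OF ti_tr[OF _ K H KH] x])
next
  fix K H x assume K: "subgroup K G" and H: "subgroup H G" and KH: "K \<subseteq> H" and x: "x \<in> tgen G T A K"
  show "tnm T K H x \<in> tgen G T A H" by (rule tgen_closure[OF ti_nm[OF _ K H KH] x])
next
  fix H g x assume H: "subgroup H G" and g: "g \<in> carrier G" and x: "x \<in> tgen G T A H"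
  show "tcj T g H x \<in> tgen G T A (conjg G g H)" by (rule tgen_closure[OF ti_cj[OF _ H g] x])
qed

lemma tgen1_tideal: "subgroup H G \<Longrightarrow> x \<in> carrier (tlev T H) \<Longrightarrow> is_tideal G T (tgen1 G T H x)"
  unfolding tgen1_def by (rule tgen_tideal) auto

lemma tprod_tideal: "is_tideal G T I \<Longrightarrow> is_tideal G T J \<Longrightarrow> is_tideal G T (tprod G T I J)"
  unfolding tprod_def
proof (rule tgen_tideal)
  fix L assume I: "is_tideal G T I" and J: "is_tideal G T J" and L: "subgroup L G"
  interpret R: cring "tlev T L" using cr[OF L] .
  show "{a \<otimes>\<^bsub>tlev T L\<^esub> b |a b. a \<in> I L \<and> b \<in> J L} \<subseteq> carrier (tlev T L)"
    using ti_car[OF I L] ti_car[OF J L] by blast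
qed

lemma tpow_tideal: "is_tideal G T I \<Longrightarrow> is_tideal G T (tpow G T I n)"
  by (induction n) (simp_all add: carrier_tideal tprod_tideal)

end


locale tmor = T: tamb G T + S: tamb G S
  for G :: "'g monoid" and T :: "('g,'a) tambara_data" and S :: "('g,'b) tambara_data" +
  fixes \<phi> :: "'g set \<Rightarrow> 'a \<Rightarrow> 'b"
  assumes mor: "is_tmorph G T S \<phi>"
begin

lemmas M = mor[unfolded is_tmorph_def]
lemma ph_hom: "subgroup H G \<Longrightarrow> \<phi> H \<in> ring_hom (tlev T H) (tlev S H)"
  by (rule conjunct1[OF M, rule_format])
lemma ph_cl: "subgroup K G \<Longrightarrow> subgroup H G \<Longrightarrow> K \<subseteq> H \<Longrightarrow>
      (\<forall>x \<in> carrier (tlev T H). \<phi> K (tres T K H x) = tres S K H (\<phi> H x)) \<and>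
      (\<forall>x \<in> carrier (tlev T K). \<phi> H (ttr T K H x) = ttr S K H (\<phi> K x)) \<and>
      (\<forall>x \<in> carrier (tlev T K). \<phi> H (tnm T K H x) = tnm S K H (\<phi> K x))"
  by (rule conjunct1[OF conjunct2[OF M], rule_format])
lemma ph_res: "subgroup K G \<Longrightarrow> subgroup H G \<Longrightarrow> K \<subseteq> H \<Longrightarrow> x \<in> carrier (tlev T H) \<Longrightarrow> \<phi> K (tres T K H x) = tres S K H (\<phi> H x)"
  using ph_cl by simp
lemma ph_tr: "subgroup K G \<Longrightarrow> subgroup H G \<Longrightarrow> K \<subseteq> H \<Longrightarrow> x \<in> carrier (tlev T K) \<Longrightarrow> \<phi> H (ttr T K H x) = ttr S K H (\<phi> K x)"
  using ph_cl by simp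
lemma ph_nm: "subgroup K G \<Longrightarrow> subgroup H G \<Longrightarrow> K \<subseteq> H \<Longrightarrow> x \<in> carrier (tlev T K) \<Longrightarrow> \<phi> H (tnm T K H x) = tnm S K H (\<phi> K x)"
  using ph_cl by simp
lemma ph_cj: "subgroup H G \<Longrightarrow> g \<in> carrier G \<Longrightarrow> x \<in> carrier (tlev T H) \<Longrightarrow> \<phi> (conjg G g H) (tcj T g H x) = tcj S g H (\<phi> H x)"
  by (rule conjunct2[OF conjunct2[OF M], rule_format])
lemma ph_car: "subgroup H G \<Longrightarrow> x \<in> carrier (tlev T H) \<Longrightarrow> \<phi> H x \<in> carrier (tlev S H)"
  by (rule ring_hom_closed[OF ph_hom])
lemma ph_mult: "subgroup H G \<Longrightarrow> x \<in> carrier (tlev T H) \<Longrightarrow> y \<in> carrier (tlev T H) \<Longrightarrow>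
   \<phi> H (x \<otimes>\<^bsub>tlev T H\<^esub> y) = \<phi> H x \<otimes>\<^bsub>tlev S H\<^esub> \<phi> H y"
  by (rule ring_hom_mult[OF ph_hom])
lemma ph_one: "subgroup H G \<Longrightarrow> \<phi> H \<one>\<^bsub>tlev T H\<^esub> = \<one>\<^bsub>tlev S H\<^esub>"
  by (rule ring_hom_one[OF ph_hom])

lemma tamb_S: "tamb G S"
  unfolding tamb_def tamb_axioms_def using T.is_group S.fin S.tam by simp

definition Zf :: "('g set \<Rightarrow> 'a set) \<Rightarrow> 'g set \<Rightarrow> 'b set" where
  "Zf I L = {s \<otimes>\<^bsub>tlev S L\<^esub> \<phi> L i | s i. s \<in> carrier (tlev S L) \<and> i \<in> I L}"

lemma Zf_zfam:
  assumes I: "is_tideal G T I"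
  shows "zfam G S (Zf I)"
proof (rule zfam.intro[OF tamb_S], rule zfam_axioms.intro)
  fix L assume L: "subgroup L G"
  interpret R: cring "tlev S L" using S.cr[OF L] .
  show "Zf I L \<subseteq> carrier (tlev S L)"
  proof
    fix z assume "z \<in> Zf I L"
    then obtain s i where z: "z = s \<otimes>\<^bsub>tlev S L\<^esub> \<phi> L i" "s \<in> carrier (tlev S L)" "i \<in> I L"
      unfolding Zf_def by blast
    have "\<phi> L i \<in> carrier (tlev S L)" using ph_car[OF L] ti_car[OF I L] z(3) by blast
    then show "z \<in> carrier (tlev S L)" using z by simp
  qed
next
  fix K L z assume K: "subgroup K G" and L: "subgroup L G" and KL: "K \<subseteq> L" and "z \<in> Zf I L"
  then obtain s i where z: "z = s \<otimes>\<^bsub>tlev S L\<^esub> \<phi> L i" "s \<in> carrier (tlev S L)" "i \<in> I L"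
    unfolding Zf_def by blast
  have ic: "i \<in> carrier (tlev T L)" using ti_car[OF I L] z(3) by blast
  have "tres S K L z = tres S K L s \<otimes>\<^bsub>tlev S K\<^esub> \<phi> K (tres T K L i)"
    using z S.res_mult[OF K L KL z(2) ph_car[OF L ic]] ph_res[OF K L KL ic] by simp
  moreover have "tres S K L s \<in> carrier (tlev S K)" using S.res_car[OF K L KL z(2)] .
  moreover have "tres T K L i \<in> I K" using ti_res[OF I K L KL z(3)] .
  ultimately show "tres S K L z \<in> Zf I K" unfolding Zf_def by blast
next
  fix L g z assume L: "subgroup L G" and g: "g \<in> carrier G" and "z \<in> Zf I L"
  then obtain s i where z: "z = s \<otimes>\<^bsub>tlev S L\<^esub> \<phi> L i" "s \<in> carrier (tlev S L)" "i \<in> I L"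
    unfolding Zf_def by blast
  have ic: "i \<in> carrier (tlev T L)" using ti_car[OF I L] z(3) by blast
  have "tcj S g L z = tcj S g L s \<otimes>\<^bsub>tlev S (conjg G g L)\<^esub> \<phi> (conjg G g L) (tcj T g L i)"
    using z S.cj_mult[OF L g z(2) ph_car[OF L ic]] ph_cj[OF L g ic] by simp
  moreover have "tcj S g L s \<in> carrier (tlev S (conjg G g L))" using S.cj_car[OF L g z(2)] .
  moreover have "tcj T g L i \<in> I (conjg G g L)" using ti_cj[OF I L g z(3)] .
  ultimately show "tcj S g L z \<in> Zf I (conjg G g L)" unfolding Zf_def by blast
next
  fix K L z assume K: "subgroup K G" and L: "subgroup L G" and KL: "K \<subseteq> L" and "z \<in> Zf I K"
  then obtain s i where z: "z = s \<otimes>\<^bsub>tlev S K\<^esub> \<phi> K i" "s \<in> carrier (tlev S K)" "i \<in> I K"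
    unfolding Zf_def by blast
  have ic: "i \<in> carrier (tlev T K)" using ti_car[OF I K] z(3) by blast
  have "tnm S K L z = tnm S K L s \<otimes>\<^bsub>tlev S L\<^esub> \<phi> L (tnm T K L i)"
    using z S.nm_mult[OF K L KL z(2) ph_car[OF K ic]] ph_nm[OF K L KL ic] by simp
  moreover have "tnm S K L s \<in> carrier (tlev S L)" using S.nm_car[OF K L KL z(2)] .
  moreover have "tnm T K L i \<in> I L" using ti_nm[OF I K L KL z(3)] .
  ultimately show "tnm S K L z \<in> Zf I L" unfolding Zf_def by blast
next
  fix L z s assume L: "subgroup L G" and "z \<in> Zf I L" and s: "s \<in> carrier (tlev S L)"
  then obtain s' i where z: "z = s' \<otimes>\<^bsub>tlev S L\<^esub> \<phi> L i" "s' \<in> carrier (tlev S L)" "i \<in> I L"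
    unfolding Zf_def by blast
  interpret R: cring "tlev S L" using S.cr[OF L] .
  have ic: "\<phi> L i \<in> carrier (tlev S L)" using ph_car[OF L] ti_car[OF I L] z(3) by blast
  have "z \<otimes>\<^bsub>tlev S L\<^esub> s = (s' \<otimes>\<^bsub>tlev S L\<^esub> s) \<otimes>\<^bsub>tlev S L\<^esub> \<phi> L i"
    using z ic s by (simp add: R.m_ac)
  moreover have "s' \<otimes>\<^bsub>tlev S L\<^esub> s \<in> carrier (tlev S L)" using z(2) s by simp
  ultimately show "z \<otimes>\<^bsub>tlev S L\<^esub> s \<in> Zf I L" using z(3) unfolding Zf_def by blast
qed

abbreviation "VV I L \<equiv> zfam.vs G S (Zf I) L"

lemma VV_tideal: "is_tideal G T I \<Longrightarrow> is_tideal G S (\<lambda>L. {v. VV I L v})"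
  by (rule zfam.V_tideal[OF Zf_zfam])

lemma VV_least: "is_tideal G T I \<Longrightarrow> is_tideal G S R \<Longrightarrow> (\<And>L. subgroup L G \<Longrightarrow> Zf I L \<subseteq> R L) \<Longrightarrow> VV I L v \<Longrightarrow> v \<in> R L"
  by (rule zfam.V_least[OF Zf_zfam])

lemma VV_gen: assumes I: "is_tideal G T I" and L: "subgroup L G" and i: "i \<in> I L" and s: "s \<in> carrier (tlev S L)"
  shows "VV I L (s \<otimes>\<^bsub>tlev S L\<^esub> \<phi> L i)"
proof -
  have "s \<otimes>\<^bsub>tlev S L\<^esub> \<phi> L i \<in> Zf I L" unfolding Zf_def using i s by blast
  then show ?thesis by (rule zfam.vs_Z[OF Zf_zfam[OF I] L])
qed

lemma VV_gen1: assumes I: "is_tideal G T I" and L: "subgroup L G" and i: "i \<in> I L"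
  shows "VV I L (\<phi> L i)"
proof -
  interpret R: cring "tlev S L" using S.cr[OF L] .
  have "\<phi> L i \<in> carrier (tlev S L)" using ph_car[OF L] ti_car[OF I L] i by blast
  then have "\<one>\<^bsub>tlev S L\<^esub> \<otimes>\<^bsub>tlev S L\<^esub> \<phi> L i = \<phi> L i" by simp
  then show ?thesis using VV_gen[OF I L i R.one_closed] by simp
qed


lemma prodA:
  assumes I: "is_tideal G T I" and I': "is_tideal G T I'" and R: "is_tideal G S R"
    and hyp: "\<And>L a b. subgroup L G \<Longrightarrow> a \<in> I L \<Longrightarrow> b \<in> I' L \<Longrightarrow> \<phi> L (a \<otimes>\<^bsub>tlev T L\<^esub> b) \<in> R L"
    and q: "VV I' L q"
  shows "\<forall>i \<in> I L. \<phi> L i \<otimes>\<^bsub>tlev S L\<^esub> q \<in> R L"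
proof -
  interpret Z': zfam G S "Zf I'" by (rule Zf_zfam[OF I'])
  show ?thesis using q
  proof (induction rule: Z'.vs.induct)
    case (vs0 L)
    interpret RL: cring "tlev S L" using S.cr[OF vs0] .
    show ?case
    proof
      fix i assume i: "i \<in> I L"
      have "\<phi> L i \<in> carrier (tlev S L)" using ph_car[OF vs0] ti_car[OF I vs0] i by blast
      then have "\<phi> L i \<otimes>\<^bsub>tlev S L\<^esub> \<zero>\<^bsub>tlev S L\<^esub> = \<zero>\<^bsub>tlev S L\<^esub>" by simp
      then show "\<phi> L i \<otimes>\<^bsub>tlev S L\<^esub> \<zero>\<^bsub>tlev S L\<^esub> \<in> R L" using ti_zero[OF R vs0] by simp
    qed
  next
    case (vstr K L z)
    interpret RL: cring "tlev S L" using S.cr[OF vstr(2)] .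
    interpret RK: cring "tlev S K" using S.cr[OF vstr(1)] .
    obtain s i' where z: "z = s \<otimes>\<^bsub>tlev S K\<^esub> \<phi> K i'" "s \<in> carrier (tlev S K)" "i' \<in> I' K"
      using vstr(4) unfolding Zf_def by blast
    have zc: "z \<in> carrier (tlev S K)" using Z'.Zcar[OF vstr(1)] vstr(4) by blast
    show ?case
    proof
      fix i assume i: "i \<in> I L"
      have ic: "i \<in> carrier (tlev T L)" using ti_car[OF I vstr(2)] i by blast
      have pic: "\<phi> L i \<in> carrier (tlev S L)" using ph_car[OF vstr(2) ic] .
      have ri: "tres T K L i \<in> I K" using ti_res[OF I vstr(1,2,3) i] .
      have ric: "tres T K L i \<in> carrier (tlev T K)" using ti_car[OF I vstr(1)] ri by blast
      have i'c: "i' \<in> carrier (tlev T K)" using ti_car[OF I' vstr(1)] z(3) by blast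
      have trc: "ttr S K L z \<in> carrier (tlev S L)" using S.tr_car[OF vstr(1,2,3) zc] .
      have "\<phi> L i \<otimes>\<^bsub>tlev S L\<^esub> ttr S K L z = ttr S K L z \<otimes>\<^bsub>tlev S L\<^esub> \<phi> L i"
        using pic trc by (simp add: RL.m_comm)
      also have "\<dots> = ttr S K L (z \<otimes>\<^bsub>tlev S K\<^esub> tres S K L (\<phi> L i))"
        using S.frob[OF vstr(1,2,3) zc pic] by simp
      also have "tres S K L (\<phi> L i) = \<phi> K (tres T K L i)" using ph_res[OF vstr(1,2,3) ic] by simp
      also have "z \<otimes>\<^bsub>tlev S K\<^esub> \<phi> K (tres T K L i) = s \<otimes>\<^bsub>tlev S K\<^esub> \<phi> K (tres T K L i \<otimes>\<^bsub>tlev T K\<^esub> i')"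
        using z ph_mult[OF vstr(1) ric i'c] ph_car[OF vstr(1) ric] ph_car[OF vstr(1) i'c]
        by (simp add: RK.m_ac)
      finally have e: "\<phi> L i \<otimes>\<^bsub>tlev S L\<^esub> ttr S K L z = ttr S K L (s \<otimes>\<^bsub>tlev S K\<^esub> \<phi> K (tres T K L i \<otimes>\<^bsub>tlev T K\<^esub> i'))" .
      have "\<phi> K (tres T K L i \<otimes>\<^bsub>tlev T K\<^esub> i') \<in> R K" using hyp[OF vstr(1) ri z(3)] .
      then have "s \<otimes>\<^bsub>tlev S K\<^esub> \<phi> K (tres T K L i \<otimes>\<^bsub>tlev T K\<^esub> i') \<in> R K" using ti_mul[OF R vstr(1) z(2)] by blast
      then show "\<phi> L i \<otimes>\<^bsub>tlev S L\<^esub> ttr S K L z \<in> R L" unfolding e using ti_tr[OF R vstr(1,2,3)] by blast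
    qed
  next
    case (vsadd L a b)
    have L: "subgroup L G" and ac: "a \<in> carrier (tlev S L)" and bc: "b \<in> carrier (tlev S L)"
      using Z'.vs_sub[OF vsadd.hyps(1)] Z'.vs_sub[OF vsadd.hyps(2)] by auto
    interpret RL: cring "tlev S L" using S.cr[OF L] .
    show ?case
    proof
      fix i assume i: "i \<in> I L"
      have pic: "\<phi> L i \<in> carrier (tlev S L)" using ph_car[OF L] ti_car[OF I L] i by blast
      have "\<phi> L i \<otimes>\<^bsub>tlev S L\<^esub> (a \<oplus>\<^bsub>tlev S L\<^esub> b) = \<phi> L i \<otimes>\<^bsub>tlev S L\<^esub> a \<oplus>\<^bsub>tlev S L\<^esub> \<phi> L i \<otimes>\<^bsub>tlev S L\<^esub> b"
        using pic ac bc by (simp add: RL.r_distr)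
      then show "\<phi> L i \<otimes>\<^bsub>tlev S L\<^esub> (a \<oplus>\<^bsub>tlev S L\<^esub> b) \<in> R L"
        using ti_add[OF R L] vsadd.IH i by simp
    qed
  qed
qed

lemma prodB:
  assumes I: "is_tideal G T I" and I': "is_tideal G T I'" and R: "is_tideal G S R"
    and hyp: "\<And>L a b. subgroup L G \<Longrightarrow> a \<in> I L \<Longrightarrow> b \<in> I' L \<Longrightarrow> \<phi> L (a \<otimes>\<^bsub>tlev T L\<^esub> b) \<in> R L"
    and p: "VV I L p"
  shows "\<forall>q. VV I' L q \<longrightarrow> p \<otimes>\<^bsub>tlev S L\<^esub> q \<in> R L"
proof -
  interpret Z: zfam G S "Zf I" by (rule Zf_zfam[OF I])
  interpret Z': zfam G S "Zf I'" by (rule Zf_zfam[OF I'])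
  show ?thesis using p
  proof (induction rule: Z.vs.induct)
    case (vs0 L)
    interpret RL: cring "tlev S L" using S.cr[OF vs0] .
    show ?case
    proof (intro allI impI)
      fix q assume q: "VV I' L q"
      have "q \<in> carrier (tlev S L)" using Z'.vs_sub[OF q] by blast
      then have "\<zero>\<^bsub>tlev S L\<^esub> \<otimes>\<^bsub>tlev S L\<^esub> q = \<zero>\<^bsub>tlev S L\<^esub>" by simp
      then show "\<zero>\<^bsub>tlev S L\<^esub> \<otimes>\<^bsub>tlev S L\<^esub> q \<in> R L" using ti_zero[OF R vs0] by simp
    qed
  next
    case (vstr K L z)
    interpret RL: cring "tlev S L" using S.cr[OF vstr(2)] .
    interpret RK: cring "tlev S K" using S.cr[OF vstr(1)] .
    obtain s i where z: "z = s \<otimes>\<^bsub>tlev S K\<^esub> \<phi> K i" "s \<in> carrier (tlev S K)" "i \<in> I K"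
      using vstr(4) unfolding Zf_def by blast
    have zc: "z \<in> carrier (tlev S K)" using Z.Zcar[OF vstr(1)] vstr(4) by blast
    show ?case
    proof (intro allI impI)
      fix q assume q: "VV I' L q"
      have qc: "q \<in> carrier (tlev S L)" using Z'.vs_sub[OF q] by blast
      have rq: "VV I' K (tres S K L q)" using Z'.vs_res[OF q vstr(1,3)] .
      have rqc: "tres S K L q \<in> carrier (tlev S K)" using S.res_car[OF vstr(1,2,3) qc] .
      have pic: "\<phi> K i \<in> carrier (tlev S K)" using ph_car[OF vstr(1)] ti_car[OF I vstr(1)] z(3) by blast
      have e: "ttr S K L z \<otimes>\<^bsub>tlev S L\<^esub> q = ttr S K L (s \<otimes>\<^bsub>tlev S K\<^esub> (\<phi> K i \<otimes>\<^bsub>tlev S K\<^esub> tres S K L q))"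
        using S.frob[OF vstr(1,2,3) zc qc] z pic rqc by (simp add: RK.m_assoc)
      have "\<phi> K i \<otimes>\<^bsub>tlev S K\<^esub> tres S K L q \<in> R K" using prodA[OF I I' R hyp rq] z(3) by blast
      then have "s \<otimes>\<^bsub>tlev S K\<^esub> (\<phi> K i \<otimes>\<^bsub>tlev S K\<^esub> tres S K L q) \<in> R K" using ti_mul[OF R vstr(1) z(2)] by blast
      then show "ttr S K L z \<otimes>\<^bsub>tlev S L\<^esub> q \<in> R L" unfolding e using ti_tr[OF R vstr(1,2,3)] by blast
    qed
  next
    case (vsadd L a b)
    have L: "subgroup L G" and ac: "a \<in> carrier (tlev S L)" and bc: "b \<in> carrier (tlev S L)"
      using Z.vs_sub[OF vsadd.hyps(1)] Z.vs_sub[OF vsadd.hyps(2)] by auto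
    interpret RL: cring "tlev S L" using S.cr[OF L] .
    show ?case
    proof (intro allI impI)
      fix q assume q: "VV I' L q"
      have qc: "q \<in> carrier (tlev S L)" using Z'.vs_sub[OF q] by blast
      have "(a \<oplus>\<^bsub>tlev S L\<^esub> b) \<otimes>\<^bsub>tlev S L\<^esub> q = a \<otimes>\<^bsub>tlev S L\<^esub> q \<oplus>\<^bsub>tlev S L\<^esub> b \<otimes>\<^bsub>tlev S L\<^esub> q"
        using qc ac bc by (simp add: RL.l_distr)
      then show "(a \<oplus>\<^bsub>tlev S L\<^esub> b) \<otimes>\<^bsub>tlev S L\<^esub> q \<in> R L"
        using ti_add[OF R L] vsadd.IH q by simp
    qed
  qed
qed


lemma pow_claim:
  assumes H: "subgroup H G" and xc: "x \<in> carrier (tlev T H)"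
  shows "subgroup L G \<Longrightarrow> tpow G S (tgen1 G S H (\<phi> H x)) n L \<subseteq> {v. VV (tpow G T (tgen1 G T H x) n) L v}"
proof (induction n arbitrary: L)
  case 0
  interpret RL: cring "tlev S L" using S.cr[OF 0] .
  interpret TL: cring "tlev T L" using T.cr[OF 0] .
  have I0: "is_tideal G T (tpow G T (tgen1 G T H x) 0)" using T.carrier_tideal by simp
  show ?case
  proof
    fix v assume "v \<in> tpow G S (tgen1 G S H (\<phi> H x)) 0 L"
    then have vc: "v \<in> carrier (tlev S L)" by simp
    have "v = v \<otimes>\<^bsub>tlev S L\<^esub> \<phi> L \<one>\<^bsub>tlev T L\<^esub>" using ph_one[OF 0] vc by simp
    moreover have "\<one>\<^bsub>tlev T L\<^esub> \<in> tpow G T (tgen1 G T H x) 0 L" by simp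
    then have "VV (tpow G T (tgen1 G T H x) 0) L (v \<otimes>\<^bsub>tlev S L\<^esub> \<phi> L \<one>\<^bsub>tlev T L\<^esub>)"
      by (rule VV_gen[OF I0 0 _ vc])
    ultimately show "v \<in> {v. VV (tpow G T (tgen1 G T H x) 0) L v}" by simp
  qed
next
  case (Suc n)
  define AT where "AT = (\<lambda>m. tpow G T (tgen1 G T H x) m)"
  define XI where "XI = tgen1 G T H x"
  have XI: "is_tideal G T XI" unfolding XI_def using T.tgen1_tideal[OF H xc] .
  have AT: "\<And>m. is_tideal G T (AT m)" unfolding AT_def using T.tpow_tideal[OF T.tgen1_tideal[OF H xc]] .
  have pxc: "\<phi> H x \<in> carrier (tlev S H)" using ph_car[OF H xc] .
  have XIs: "\<And>M. subgroup M G \<Longrightarrow> tgen1 G S H (\<phi> H x) M \<subseteq> {v. VV XI M v}"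
    unfolding tgen1_def
  proof (rule tgen_least[OF VV_tideal[OF XI]])
    fix M assume M: "subgroup M G"
    show "(if M = H then {\<phi> H x} else {}) \<subseteq> {v. VV XI M v}"
    proof (cases "M = H")
      case True
      have "x \<in> XI H" unfolding XI_def tgen1_def using tgen_gen[OF H, of "\<lambda>L. if L = H then {x} else {}" T] by simp
      then have "VV XI H (\<phi> H x)" using VV_gen1[OF XI H] by blast
      then show ?thesis using True by simp
    qed simp
  qed
  have hyp: "\<phi> L (a \<otimes>\<^bsub>tlev T L\<^esub> b) \<in> {v. VV (AT (Suc n)) L v}"
    if L: "subgroup L G" and a: "a \<in> AT n L" and b: "b \<in> XI L" for L a b
  proof -
    have eq: "AT (Suc n) = tgen G T (\<lambda>L. {a \<otimes>\<^bsub>tlev T L\<^esub> b |a b. a \<in> AT n L \<and> b \<in> XI L})"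
      unfolding AT_def XI_def by (simp add: tprod_def)
    have "a \<otimes>\<^bsub>tlev T L\<^esub> b \<in> {a \<otimes>\<^bsub>tlev T L\<^esub> b |a b. a \<in> AT n L \<and> b \<in> XI L}" using a b by blast
    then have "a \<otimes>\<^bsub>tlev T L\<^esub> b \<in> AT (Suc n) L" unfolding eq by (rule subsetD[OF tgen_gen[OF L]])
    then show ?thesis using VV_gen1[OF AT L] by simp
  qed
  have eqS: "tpow G S (tgen1 G S H (\<phi> H x)) (Suc n) = tgen G S (\<lambda>L. {a \<otimes>\<^bsub>tlev S L\<^esub> b |a b.
       a \<in> tpow G S (tgen1 G S H (\<phi> H x)) n L \<and> b \<in> tgen1 G S H (\<phi> H x) L})"
    by (simp add: tprod_def)
  have ATS: "is_tideal G T (tpow G T (tgen1 G T H x) (Suc n))" using T.tpow_tideal[OF T.tgen1_tideal[OF H xc]] .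
  show ?case
    unfolding eqS
  proof (rule tgen_least[OF VV_tideal[OF ATS]])
    fix M assume M: "subgroup M G"
    show "{a \<otimes>\<^bsub>tlev S M\<^esub> b |a b. a \<in> tpow G S (tgen1 G S H (\<phi> H x)) n M \<and> b \<in> tgen1 G S H (\<phi> H x) M}
          \<subseteq> {v. VV (tpow G T (tgen1 G T H x) (Suc n)) M v}"
    proof
      fix v assume "v \<in> {a \<otimes>\<^bsub>tlev S M\<^esub> b |a b. a \<in> tpow G S (tgen1 G S H (\<phi> H x)) n M \<and> b \<in> tgen1 G S H (\<phi> H x) M}"
      then obtain a b where v: "v = a \<otimes>\<^bsub>tlev S M\<^esub> b" and a: "a \<in> tpow G S (tgen1 G S H (\<phi> H x)) n M"
        and b: "b \<in> tgen1 G S H (\<phi> H x) M" by blast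
      have va: "VV (AT n) M a" using subsetD[OF Suc.IH[OF M] a] unfolding AT_def by simp
      have vb: "VV XI M b" using subsetD[OF XIs[OF M] b] by simp
      have pB: "\<forall>q. VV XI M q \<longrightarrow> a \<otimes>\<^bsub>tlev S M\<^esub> q \<in> {v. VV (AT (Suc n)) M v}"
        using hyp by (rule prodB[OF AT XI VV_tideal[OF AT] _ va])
      have "a \<otimes>\<^bsub>tlev S M\<^esub> b \<in> {v. VV (AT (Suc n)) M v}"
        using pB vb by simp
      then show "v \<in> {v. VV (tpow G T (tgen1 G T H x) (Suc n)) M v}" using v unfolding AT_def by simp
    qed
  qed
qed

lemma preim_tideal:
  assumes R: "is_tideal G S R"
  shows "is_tideal G T (tpreim T \<phi> R)"
  unfolding is_tideal_def
proof (intro conjI allI impI ballI)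
  fix H assume H: "subgroup H G"
  interpret h: ring_hom_ring "tlev T H" "tlev S H" "\<phi> H"
    by (rule ring_hom_ringI2[OF T.rg[OF H] S.rg[OF H] ph_hom[OF H]])
  show "ideal (tpreim T \<phi> R H) (tlev T H)"
    unfolding tpreim_def using h.ideal_vimage[OF ti_ideal[OF R H]] by simp
next
  fix K H x assume K: "subgroup K G" and H: "subgroup H G" and KH: "K \<subseteq> H" and x: "x \<in> tpreim T \<phi> R H"
  then have xc: "x \<in> carrier (tlev T H)" and px: "\<phi> H x \<in> R H" unfolding tpreim_def by auto
  have "\<phi> K (tres T K H x) \<in> R K" using ph_res[OF K H KH xc] ti_res[OF R K H KH px] by simp
  then show "tres T K H x \<in> tpreim T \<phi> R K" unfolding tpreim_def using T.res_car[OF K H KH xc] by simp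
next
  fix K H x assume K: "subgroup K G" and H: "subgroup H G" and KH: "K \<subseteq> H" and x: "x \<in> tpreim T \<phi> R K"
  then have xc: "x \<in> carrier (tlev T K)" and px: "\<phi> K x \<in> R K" unfolding tpreim_def by auto
  have "\<phi> H (ttr T K H x) \<in> R H" using ph_tr[OF K H KH xc] ti_tr[OF R K H KH px] by simp
  then show "ttr T K H x \<in> tpreim T \<phi> R H" unfolding tpreim_def using T.tr_car[OF K H KH xc] by simp
next
  fix K H x assume K: "subgroup K G" and H: "subgroup H G" and KH: "K \<subseteq> H" and x: "x \<in> tpreim T \<phi> R K"
  then have xc: "x \<in> carrier (tlev T K)" and px: "\<phi> K x \<in> R K" unfolding tpreim_def by auto
  have "\<phi> H (tnm T K H x) \<in> R H" using ph_nm[OF K H KH xc] ti_nm[OF R K H KH px] by simp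
  then show "tnm T K H x \<in> tpreim T \<phi> R H" unfolding tpreim_def using T.nm_car[OF K H KH xc] by simp
next
  fix H g x assume H: "subgroup H G" and g: "g \<in> carrier G" and x: "x \<in> tpreim T \<phi> R H"
  then have xc: "x \<in> carrier (tlev T H)" and px: "\<phi> H x \<in> R H" unfolding tpreim_def by auto
  have "\<phi> (conjg G g H) (tcj T g H x) \<in> R (conjg G g H)" using ph_cj[OF H g xc] ti_cj[OF R H g px] by simp
  then show "tcj T g H x \<in> tpreim T \<phi> R (conjg G g H)" unfolding tpreim_def using T.cj_car[OF H g xc] by simp
qed

end


theorem lemma6p9:
  fixes G :: "'g monoid"
    and T :: "('g,'a) tambara_data" and S :: "('g,'b) tambara_data"
    and \<phi> :: "'g set \<Rightarrow> 'a \<Rightarrow> 'b" and J :: "'g set \<Rightarrow> 'b set"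
  assumes "group G" and "finite (carrier G)"
    and "is_tambara G T" and "is_tambara G S"
    and "is_tmorph G T S \<phi>"
    and "is_tideal G S J" and "is_radical G S J"
  shows "is_tideal G T (tpreim T \<phi> J) \<and> is_radical G T (tpreim T \<phi> J)"
proof -
  interpret tmor G T S \<phi>
    by (simp add: tmor_def tmor_axioms_def tamb_def tamb_axioms_def assms)
  have J: "is_tideal G S J" by fact
  have P: "is_tideal G T (tpreim T \<phi> J)" using preim_tideal[OF J] .
  have "is_radical G T (tpreim T \<phi> J)" unfolding is_radical_def
  proof (intro allI impI)
    fix H assume H: "subgroup H G"
    show "tpreim T \<phi> J H = tradical G T (tpreim T \<phi> J) H"
    proof
      show "tpreim T \<phi> J H \<subseteq> tradical G T (tpreim T \<phi> J) H"
      proof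
        fix x assume x: "x \<in> tpreim T \<phi> J H"
        then have xc: "x \<in> carrier (tlev T H)" unfolding tpreim_def by simp
        have X1: "tgen1 G T H x M \<subseteq> tpreim T \<phi> J M" for M
          unfolding tgen1_def
        proof (rule tgen_least[OF P])
          fix N assume "subgroup N G"
          show "(if N = H then {x} else {}) \<subseteq> tpreim T \<phi> J N" using x by simp
        qed
        have pw: "tpow G T (tgen1 G T H x) 1 L \<subseteq> tpreim T \<phi> J L" if L: "subgroup L G" for L
        proof -
          have eq: "tpow G T (tgen1 G T H x) 1 = tgen G T (\<lambda>L. {a \<otimes>\<^bsub>tlev T L\<^esub> b |a b.
                a \<in> carrier (tlev T L) \<and> b \<in> tgen1 G T H x L})"
            by (simp add: tprod_def)
          show ?thesis unfolding eq
          proof (rule tgen_least[OF P])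
            fix M assume M: "subgroup M G"
            show "{a \<otimes>\<^bsub>tlev T M\<^esub> b |a b. a \<in> carrier (tlev T M) \<and> b \<in> tgen1 G T H x M} \<subseteq> tpreim T \<phi> J M"
            proof
              fix v assume "v \<in> {a \<otimes>\<^bsub>tlev T M\<^esub> b |a b. a \<in> carrier (tlev T M) \<and> b \<in> tgen1 G T H x M}"
              then obtain a b where v: "v = a \<otimes>\<^bsub>tlev T M\<^esub> b" and a: "a \<in> carrier (tlev T M)"
                and b: "b \<in> tgen1 G T H x M" by blast
              have "b \<in> tpreim T \<phi> J M" using subsetD[OF X1 b] .
              then show "v \<in> tpreim T \<phi> J M" unfolding v by (rule ti_mul[OF P M a])
            qed
          qed
        qed
        show "x \<in> tradical G T (tpreim T \<phi> J) H"
          unfolding tradical_def mem_Collect_eq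
          apply (rule conjI[OF xc])
          apply (rule exI[of _ "1::nat"])
          using pw by simp
      qed
    next
      show "tradical G T (tpreim T \<phi> J) H \<subseteq> tpreim T \<phi> J H"
      proof
        fix x assume "x \<in> tradical G T (tpreim T \<phi> J) H"
        then have xc: "x \<in> carrier (tlev T H)" and
          ex: "\<exists>n\<ge>1. \<forall>L. subgroup L G \<longrightarrow> tpow G T (tgen1 G T H x) n L \<subseteq> tpreim T \<phi> J L"
          unfolding tradical_def by simp_all
        then obtain n where n: "n \<ge> 1" and pw: "\<And>L. subgroup L G \<Longrightarrow> tpow G T (tgen1 G T H x) n L \<subseteq> tpreim T \<phi> J L"
          by blast
        have AT: "is_tideal G T (tpow G T (tgen1 G T H x) n)" using T.tpow_tideal[OF T.tgen1_tideal[OF H xc]] .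
        have ZJ: "Zf (tpow G T (tgen1 G T H x) n) L \<subseteq> J L" if L: "subgroup L G" for L
        proof
          fix z assume "z \<in> Zf (tpow G T (tgen1 G T H x) n) L"
          then obtain s a where z: "z = s \<otimes>\<^bsub>tlev S L\<^esub> \<phi> L a" and s: "s \<in> carrier (tlev S L)"
            and a: "a \<in> tpow G T (tgen1 G T H x) n L" unfolding Zf_def by blast
          have "a \<in> tpreim T \<phi> J L" using subsetD[OF pw[OF L] a] .
          then have "\<phi> L a \<in> J L" unfolding tpreim_def by simp
          then show "z \<in> J L" unfolding z by (rule ti_mul[OF J L s])
        qed
        have sub: "tpow G S (tgen1 G S H (\<phi> H x)) n L \<subseteq> J L" if L: "subgroup L G" for L
        proof
          fix v assume "v \<in> tpow G S (tgen1 G S H (\<phi> H x)) n L"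
          then have "VV (tpow G T (tgen1 G T H x) n) L v" using subsetD[OF pow_claim[OF H xc L]] by simp
          then show "v \<in> J L" using VV_least[OF AT J ZJ] by blast
        qed
        have "\<phi> H x \<in> tradical G S J H"
          unfolding tradical_def mem_Collect_eq
          apply (rule conjI[OF ph_car[OF H xc]])
          apply (rule exI[of _ n])
          using n sub by simp
        moreover have "J H = tradical G S J H" using assms(7) H unfolding is_radical_def by simp
        ultimately have "\<phi> H x \<in> J H" by simp
        then show "x \<in> tpreim T \<phi> J H" unfolding tpreim_def using xc by simp
      qed
    qed
  qed
  then show ?thesis using P by simp
qed

end
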